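(* For every $1\le i\le r-2$ and every $j\in I\setminus X$ one has $\widetilde\tau_r\widetilde\tau_i(B_j)=\widetilde\tau_i\widetilde\tau_r(B_j)$.
   Context: Let $\mathbb K$ be a field of characteristic zero, $q$ an indeterminate, $\mathbb K'$ a field extension of $\mathbb K(q^{1/2})$ containing square roots of all parameters $c_i$ below; all algebras are over $\mathbb K'$. $n\ge1$, $I=\{1,\dots,n\}$, $\mathfrak g=\mathfrak{sl}_{n+1}(\mathbb C)$, simple roots $\alpha_i$, fundamental weights $\varpi_i$, weight lattice $P$, Cartan matrix $a_{ii}=2$, $a_{ij}=-1$ if $|i-j|=1$, else $0$, form $(\alpha_i,\alpha_j)=a_{ij}$, $(\alpha_i,\varpi_j)=\delta_{ij}$; simple reflections $\sigma_i$. $U_q(\mathfrak g)$ is generated by $E_i,F_i,K_\mu$ ($\mu\in P$) with $K_0=1$, $K_\mu K_\lambda=K_{\mu+\lambda}$, $K_\mu E_i=q^{(\alpha_i,\mu)}E_iK_\mu$, $K_\mu F_i=q^{-(\alpha_i,\mu)}F_iK_\mu$, $E_iF_j-F_jE_i=\delta_{ij}\frac{K_i-K_i^{-1}}{q-q^{-1}}$ ($K_i=K_{\alpha_i}$), and the quantum Serre relations. $[a,b]_c=ab-cba$. Lusztig automorphisms: $T_i(E_i)=-F_iK_i$, $T_i(F_i)=-K_i^{-1}E_i$, $T_i(K_\mu)=K_{\sigma_i(\mu)}$, $T_i(E_j)=E_j,T_i(F_j)=F_j$ if $a_{ij}=0$, $T_i(E_j)=[E_i,E_j]_{q^{-1}}$,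 $T_i(F_j)=[F_j,F_i]_q$ if $a_{ij}=-1$. Fix $r$ with $1\le r\le\lceil n/2\rceil-1$, $X=\{r+1,\dots,n-r\}$, $\tau(i)=n-i+1$ (on weights $\varpi_i\mapsto\varpi_{\tau(i)}$). $E_X^+=[E_{r+1},[\dots,[E_{n-r-1},E_{n-r}]_{q^{-1}}\dots]_{q^{-1}}]_{q^{-1}}$, $E_X^-=[E_{n-r},[\dots,[E_{r+2},E_{r+1}]_{q^{-1}}\dots]_{q^{-1}}]_{q^{-1}}$, $F_X^+=[F_{r+1},[\dots,[F_{n-r-1},F_{n-r}]_q\dots]_q]_q$, $F_X^-=[F_{n-r},[\dots,[F_{r+2},F_{r+1}]_q\dots]_q]_q$; $K_X=K_{r+1}\cdots K_{n-r}$; $L_i=K_iK_{\tau(i)}^{-1}$; $\varpi'_i=\varpi_i-\varpi_{\tau(i)}$. $\mathcal M_X$ is generated by $E_j,F_j,K_j^{\pm1}$ ($j\in X$); $U^0_\Theta$ by the $K_\mu$ with $-w_X\tau(\mu)=\mu$ ($w_X$ longest element of the parabolic Weyl subgroup for $X$). Parameters $c_i\in\mathbb K(q^{1/2})^\times$ ($i\in I\setminus X$) with $c_i=c_{\tau(i)}$ for $i\notin X\cup\{r,\tau(r)\}$. $B_i=F_i-c_iE_{\tau(i)}K_i^{-1}$ for $i\in I\setminus(X\cup\{r,\tau(r)\})$, $B_r=F_r-c_r[E_X^+,E_{\tau(r)}]_{q^{-1}}K_r^{-1}$, $B_{\tau(r)}=F_{\tau(r)}-c_{\tau(r)}[E_X^-,E_r]_{q^{-1}}K_{\tau(r)}^{-1}$;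 $B_{\mathbf c}$ is generated by $\mathcal M_X$, $U^0_\Theta$ and the $B_i$. $C=(qc_rc_{\tau(r)})^{-1/2}$; items involving $r-1$ occur only when $r\ge2$. For $1\le i\le r-1$, $\widetilde\tau_i$ is the unique algebra automorphism of $B_{\mathbf c}$ equal to $T_iT_{\tau(i)}$ on $\mathcal M_XU^0_\Theta$ with $\widetilde\tau_i(B_j)=q^{-1}B_{\tau(j)}L_{\tau(j)}$ if $j\in\{i,\tau(i)\}$, $(qc_i)^{-1/2}[B_j,B_i]_q$ if $a_{ij}=-1$, $(qc_{\tau(i)})^{-1/2}[B_j,B_{\tau(i)}]_q$ if $a_{\tau(i)j}=-1$, $B_j$ if $a_{ij}=a_{\tau(i)j}=0$ ($j\in I\setminus X$). $\widetilde\tau_r$ is the unique algebra automorphism of $B_{\mathbf c}$ equal to $T_rT_{r+1}\cdots T_{n-r+1}\cdots T_{r+1}T_r$ on $\mathcal M_XU^0_\Theta$ with $\widetilde\tau_r(B_r)=q^{-1}B_rL_rK_{\varpi'_{r+1}}$, $\widetilde\tau_r(B_{\tau(r)})=q^{-1}B_{\tau(r)}L_{\tau(r)}K_{\varpi'_{\tau(r+1)}}$, $\widetilde\tau_r(B_{r-1})=C([B_{r-1},[B_r,[F_X^+,B_{\tau(r)}]_q]_q]_q+qc_{\tau(r)}B_{r-1}L_rK_X^{-1})$, $\widetilde\tau_r(B_{\tau(r-1)})=C([B_{\tau(r-1)},[B_{\tau(r)},[F_X^-,B_r]_q]_q]_q+qc_rB_{\tau(r-1)}L_{\tau(r)}K_X^{-1})$,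 $\widetilde\tau_r(B_j)=B_j$ otherwise. *)

theory Defs
  imports "HOL-Computational_Algebra.Polynomial"
begin

text \<open>Cartan matrix of type A (indices in I = {1..n}).\<close>
definition cartan :: "nat \<Rightarrow> nat \<Rightarrow> int" where
  "cartan i j = (if i = j then 2 else if i = j + 1 \<or> j = i + 1 then -1 else 0)"

text \<open>Weights are written in the basis of fundamental weights: a weight mu is the
  integer vector (mu k)_k with mu = sum_k mu k * varpi_k; hence (alpha_i, mu) = mu i.\<close>
type_synonym weight = "nat \<Rightarrow> int"

definition wt_lattice :: "nat \<Rightarrow> weight set" where
  "wt_lattice n = {\<mu>. \<forall>k. k \<notin> {1..n} \<longrightarrow> \<mu> k = 0}"

definition wzero :: weight where "wzero = (\<lambda>k. 0)"
definition wadd :: "weight \<Rightarrow> weight \<Rightarrow> weight" where "wadd \<mu> \<nu> = (\<lambda>k. \<mu> k + \<nu> k)"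
definition wneg :: "weight \<Rightarrow> weight" where "wneg \<mu> = (\<lambda>k. - \<mu> k)"
definition wsub :: "weight \<Rightarrow> weight \<Rightarrow> weight" where "wsub \<mu> \<nu> = (\<lambda>k. \<mu> k - \<nu> k)"

definition fund_wt :: "nat \<Rightarrow> weight" where "fund_wt i = (\<lambda>k. if k = i then 1 else 0)"

text \<open>simple root alpha_i = sum_k a_{ki} varpi_k\<close>
definition sroot :: "nat \<Rightarrow> nat \<Rightarrow> weight" where
  "sroot n i = (\<lambda>k. if k \<in> {1..n} then cartan i k else 0)"

definition tauI :: "nat \<Rightarrow> nat \<Rightarrow> nat" where "tauI n i = Suc n - i"

definition tau_wt :: "nat \<Rightarrow> weight \<Rightarrow> weight" where
  "tau_wt n \<mu> = (\<lambda>k. if k \<in> {1..n} then \<mu> (tauI n k) else 0)"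

definition srefl :: "nat \<Rightarrow> nat \<Rightarrow> weight \<Rightarrow> weight" where
  "srefl n i \<mu> = (\<lambda>k. \<mu> k - \<mu> i * sroot n i k)"

text \<open>A reduced word s_a (s_{a+1} s_a) ... (s_b ... s_a) of the longest element of the
  parabolic Weyl subgroup generated by s_a, ..., s_b, and its action on weights.\<close>
definition wX_word :: "nat \<Rightarrow> nat \<Rightarrow> nat list" where
  "wX_word a b = concat (map (\<lambda>t. rev [a..<a + t + 1]) [0..<b + 1 - a])"

definition wX_act :: "nat \<Rightarrow> nat \<Rightarrow> nat \<Rightarrow> weight \<Rightarrow> weight" where
  "wX_act n a b \<mu> = foldr (srefl n) (wX_word a b) \<mu>"

definition subfield :: "'k::field set \<Rightarrow> bool" where
  "subfield S \<longleftrightarrow> 0 \<in> S \<and> 1 \<in> S \<and> (\<forall>x\<in>S. \<forall>y\<in>S. x + y \<in> S \<and> x * y \<in> S)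
     \<and> (\<forall>x\<in>S. - x \<in> S \<and> inverse x \<in> S)"

definition transcendental_over :: "'k::field set \<Rightarrow> 'k \<Rightarrow> bool" where
  "transcendental_over S s \<longleftrightarrow> (\<forall>p. p \<noteq> 0 \<and> (\<forall>i. coeff p i \<in> S) \<longrightarrow> poly p s \<noteq> 0)"

definition adjoin :: "'k::field set \<Rightarrow> 'k \<Rightarrow> 'k set" where
  "adjoin S s = {poly p s / poly p' s | p p'. (\<forall>i. coeff p i \<in> S) \<and> (\<forall>i. coeff p' i \<in> S)
                   \<and> poly p' s \<noteq> 0}"

text \<open>An associative unital algebra over the field 'k: a ring 'a together with a
  ring homomorphism sc from 'k into the centre of 'a.\<close>
definition scalar_alg :: "('k::field \<Rightarrow> 'a::ring_1) \<Rightarrow> bool" where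
  "scalar_alg sc \<longleftrightarrow> (\<forall>x y. sc (x + y) = sc x + sc y) \<and> (\<forall>x y. sc (x * y) = sc x * sc y)
     \<and> sc 1 = 1 \<and> (\<forall>x a. sc x * a = a * sc x)"

inductive_set alg_gen :: "('k \<Rightarrow> 'a::ring_1) \<Rightarrow> 'a set \<Rightarrow> 'a set" for sc G where
  gen: "x \<in> G \<Longrightarrow> x \<in> alg_gen sc G"
| scal: "sc k \<in> alg_gen sc G"
| add: "x \<in> alg_gen sc G \<Longrightarrow> y \<in> alg_gen sc G \<Longrightarrow> x + y \<in> alg_gen sc G"
| mult: "x \<in> alg_gen sc G \<Longrightarrow> y \<in> alg_gen sc G \<Longrightarrow> x * y \<in> alg_gen sc G"

definition alg_hom_on :: "('k \<Rightarrow> 'a::ring_1) \<Rightarrow> 'a set \<Rightarrow> ('a \<Rightarrow> 'a) \<Rightarrow> bool" where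
  "alg_hom_on sc S f \<longleftrightarrow> f 1 = 1 \<and> (\<forall>x\<in>S. \<forall>y\<in>S. f (x + y) = f x + f y \<and> f (x * y) = f x * f y)
     \<and> (\<forall>k. \<forall>x\<in>S. f (sc k * x) = sc k * f x)"

definition alg_aut_on :: "('k \<Rightarrow> 'a::ring_1) \<Rightarrow> 'a set \<Rightarrow> ('a \<Rightarrow> 'a) \<Rightarrow> bool" where
  "alg_aut_on sc S f \<longleftrightarrow> alg_hom_on sc S f \<and> bij_betw f S S"

definition qbr :: "('k \<Rightarrow> 'a::ring_1) \<Rightarrow> 'k \<Rightarrow> 'a \<Rightarrow> 'a \<Rightarrow> 'a" where
  "qbr sc c a b = a * b - sc c * (b * a)"

definition uq_rels :: "nat \<Rightarrow> ('k::field \<Rightarrow> 'a::ring_1) \<Rightarrow> 'k \<Rightarrow> (nat \<Rightarrow> 'a) \<Rightarrow> (nat \<Rightarrow> 'a)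
    \<Rightarrow> (weight \<Rightarrow> 'a) \<Rightarrow> bool" where
  "uq_rels n sc q E F K \<longleftrightarrow>
     K wzero = 1
   \<and> (\<forall>\<mu>\<in>wt_lattice n. \<forall>\<nu>\<in>wt_lattice n. K \<mu> * K \<nu> = K (wadd \<mu> \<nu>))
   \<and> (\<forall>\<mu>\<in>wt_lattice n. \<forall>i\<in>{1..n}. K \<mu> * E i = sc (q powi \<mu> i) * E i * K \<mu>)
   \<and> (\<forall>\<mu>\<in>wt_lattice n. \<forall>i\<in>{1..n}. K \<mu> * F i = sc (q powi (- \<mu> i)) * F i * K \<mu>)
   \<and> (\<forall>i\<in>{1..n}. \<forall>j\<in>{1..n}. E i * F j - F j * E i =
        (if i = j then sc (1 / (q - 1 / q)) * (K (sroot n i) - K (wneg (sroot n i))) else 0))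
   \<and> (\<forall>i\<in>{1..n}. \<forall>j\<in>{1..n}. cartan i j = -1 \<longrightarrow>
        E i * E i * E j - sc (q + 1 / q) * (E i * E j * E i) + E j * E i * E i = 0
      \<and> F i * F i * F j - sc (q + 1 / q) * (F i * F j * F i) + F j * F i * F i = 0)
   \<and> (\<forall>i\<in>{1..n}. \<forall>j\<in>{1..n}. i \<noteq> j \<and> cartan i j = 0 \<longrightarrow>
        E i * E j = E j * E i \<and> F i * F j = F j * F i)"

definition lusztig :: "nat \<Rightarrow> ('k::field \<Rightarrow> 'a::ring_1) \<Rightarrow> 'k \<Rightarrow> (nat \<Rightarrow> 'a) \<Rightarrow> (nat \<Rightarrow> 'a)
    \<Rightarrow> (weight \<Rightarrow> 'a) \<Rightarrow> nat \<Rightarrow> ('a \<Rightarrow> 'a) \<Rightarrow> bool" where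
  "lusztig n sc q E F K i T \<longleftrightarrow>
     alg_aut_on sc UNIV T
   \<and> T (E i) = - (F i * K (sroot n i))
   \<and> T (F i) = - (K (wneg (sroot n i)) * E i)
   \<and> (\<forall>\<mu>\<in>wt_lattice n. T (K \<mu>) = K (srefl n i \<mu>))
   \<and> (\<forall>j\<in>{1..n}. j \<noteq> i \<and> cartan i j = 0 \<longrightarrow> T (E j) = E j \<and> T (F j) = F j)
   \<and> (\<forall>j\<in>{1..n}. cartan i j = -1 \<longrightarrow>
        T (E j) = qbr sc (1 / q) (E i) (E j) \<and> T (F j) = qbr sc q (F j) (F i))"

definition Xset :: "nat \<Rightarrow> nat \<Rightarrow> nat set" where "Xset n r = {r + 1..n - r}"

definition EXp :: "('k::field \<Rightarrow> 'a::ring_1) \<Rightarrow> 'k \<Rightarrow> (nat \<Rightarrow> 'a) \<Rightarrow> nat \<Rightarrow> nat \<Rightarrow> 'a" where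
  "EXp sc q E n r = foldr (\<lambda>k acc. qbr sc (1 / q) (E k) acc) [r + 1..<n - r] (E (n - r))"
definition EXm :: "('k::field \<Rightarrow> 'a::ring_1) \<Rightarrow> 'k \<Rightarrow> (nat \<Rightarrow> 'a) \<Rightarrow> nat \<Rightarrow> nat \<Rightarrow> 'a" where
  "EXm sc q E n r = foldr (\<lambda>k acc. qbr sc (1 / q) (E k) acc) (rev [r + 2..<n - r + 1]) (E (r + 1))"
definition FXp :: "('k::field \<Rightarrow> 'a::ring_1) \<Rightarrow> 'k \<Rightarrow> (nat \<Rightarrow> 'a) \<Rightarrow> nat \<Rightarrow> nat \<Rightarrow> 'a" where
  "FXp sc q F n r = foldr (\<lambda>k acc. qbr sc q (F k) acc) [r + 1..<n - r] (F (n - r))"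
definition FXm :: "('k::field \<Rightarrow> 'a::ring_1) \<Rightarrow> 'k \<Rightarrow> (nat \<Rightarrow> 'a) \<Rightarrow> nat \<Rightarrow> nat \<Rightarrow> 'a" where
  "FXm sc q F n r = foldr (\<lambda>k acc. qbr sc q (F k) acc) (rev [r + 2..<n - r + 1]) (F (r + 1))"

definition KXinv :: "(weight \<Rightarrow> 'a) \<Rightarrow> nat \<Rightarrow> nat \<Rightarrow> 'a" where
  "KXinv K n r = K (\<lambda>k. - (\<Sum>j\<in>Xset n r. sroot n j k))"

definition Lw :: "(weight \<Rightarrow> 'a) \<Rightarrow> nat \<Rightarrow> nat \<Rightarrow> 'a" where
  "Lw K n i = K (wsub (sroot n i) (sroot n (tauI n i)))"

definition Kvp :: "(weight \<Rightarrow> 'a) \<Rightarrow> nat \<Rightarrow> nat \<Rightarrow> 'a" where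
  "Kvp K n i = K (wsub (fund_wt i) (fund_wt (tauI n i)))"

definition Bgen :: "nat \<Rightarrow> nat \<Rightarrow> ('k::field \<Rightarrow> 'a::ring_1) \<Rightarrow> 'k \<Rightarrow> (nat \<Rightarrow> 'k) \<Rightarrow> (nat \<Rightarrow> 'a)
    \<Rightarrow> (nat \<Rightarrow> 'a) \<Rightarrow> (weight \<Rightarrow> 'a) \<Rightarrow> nat \<Rightarrow> 'a" where
  "Bgen n r sc q c E F K j =
    (if j = r then F r - sc (c r) * qbr sc (1 / q) (EXp sc q E n r) (E (tauI n r)) * K (wneg (sroot n r))
     else if j = tauI n r then
       F j - sc (c j) * qbr sc (1 / q) (EXm sc q E n r) (E r) * K (wneg (sroot n j))
     else F j - sc (c j) * E (tauI n j) * K (wneg (sroot n j)))"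

definition MX :: "nat \<Rightarrow> nat \<Rightarrow> ('k \<Rightarrow> 'a::ring_1) \<Rightarrow> (nat \<Rightarrow> 'a) \<Rightarrow> (nat \<Rightarrow> 'a)
    \<Rightarrow> (weight \<Rightarrow> 'a) \<Rightarrow> 'a set" where
  "MX n r sc E F K = alg_gen sc ((E ` Xset n r) \<union> (F ` Xset n r)
      \<union> ((\<lambda>j. K (sroot n j)) ` Xset n r) \<union> ((\<lambda>j. K (wneg (sroot n j))) ` Xset n r))"

definition U0Theta :: "nat \<Rightarrow> nat \<Rightarrow> ('k \<Rightarrow> 'a::ring_1) \<Rightarrow> (weight \<Rightarrow> 'a) \<Rightarrow> 'a set" where
  "U0Theta n r sc K = alg_gen sc (K ` {\<mu> \<in> wt_lattice n.
      wneg (wX_act n (r + 1) (n - r) (tau_wt n \<mu>)) = \<mu>})"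

definition MXU0 :: "nat \<Rightarrow> nat \<Rightarrow> ('k \<Rightarrow> 'a::ring_1) \<Rightarrow> (nat \<Rightarrow> 'a) \<Rightarrow> (nat \<Rightarrow> 'a)
    \<Rightarrow> (weight \<Rightarrow> 'a) \<Rightarrow> 'a set" where
  "MXU0 n r sc E F K = {m * u | m u. m \<in> MX n r sc E F K \<and> u \<in> U0Theta n r sc K}"

definition Bc :: "nat \<Rightarrow> nat \<Rightarrow> ('k \<Rightarrow> 'a::ring_1) \<Rightarrow> (nat \<Rightarrow> 'a) \<Rightarrow> (nat \<Rightarrow> 'a)
    \<Rightarrow> (weight \<Rightarrow> 'a) \<Rightarrow> (nat \<Rightarrow> 'a) \<Rightarrow> 'a set" where
  "Bc n r sc E F K B = alg_gen sc (MX n r sc E F K \<union> U0Theta n r sc K \<union> B ` ({1..n} - Xset n r))"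

text \<open>tilde-tau_i for 1 <= i <= r-1. Here s = q^{1/2} and g i is a square root of c_i,
  so (q c_i)^{-1/2} = 1 / (s * g i).\<close>
definition ttau_i_spec :: "nat \<Rightarrow> nat \<Rightarrow> ('k::field \<Rightarrow> 'a::ring_1) \<Rightarrow> 'k \<Rightarrow> (nat \<Rightarrow> 'k)
    \<Rightarrow> (nat \<Rightarrow> 'a) \<Rightarrow> (nat \<Rightarrow> 'a) \<Rightarrow> (weight \<Rightarrow> 'a) \<Rightarrow> (nat \<Rightarrow> 'a \<Rightarrow> 'a) \<Rightarrow> (nat \<Rightarrow> 'a)
    \<Rightarrow> nat \<Rightarrow> ('a \<Rightarrow> 'a) \<Rightarrow> bool" where
  "ttau_i_spec n r sc s g E F K T B i t \<longleftrightarrow>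
     alg_aut_on sc (Bc n r sc E F K B) t
   \<and> (\<forall>x\<in>MXU0 n r sc E F K. t x = T i (T (tauI n i) x))
   \<and> (\<forall>j\<in>{1..n} - Xset n r.
        (j \<in> {i, tauI n i} \<longrightarrow> t (B j) = sc (1 / s^2) * B (tauI n j) * Lw K n (tauI n j))
      \<and> (cartan i j = -1 \<longrightarrow> t (B j) = sc (1 / (s * g i)) * qbr sc (s^2) (B j) (B i))
      \<and> (cartan (tauI n i) j = -1 \<longrightarrow>
           t (B j) = sc (1 / (s * g (tauI n i))) * qbr sc (s^2) (B j) (B (tauI n i)))
      \<and> (cartan i j = 0 \<and> cartan (tauI n i) j = 0 \<longrightarrow> t (B j) = B j))"

text \<open>tilde-tau_r; C = (q c_r c_{tau(r)})^{-1/2} = 1 / (s * g r * g (tau r)).\<close>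
definition ttau_r_spec :: "nat \<Rightarrow> nat \<Rightarrow> ('k::field \<Rightarrow> 'a::ring_1) \<Rightarrow> 'k \<Rightarrow> (nat \<Rightarrow> 'k)
    \<Rightarrow> (nat \<Rightarrow> 'k) \<Rightarrow> (nat \<Rightarrow> 'a) \<Rightarrow> (nat \<Rightarrow> 'a) \<Rightarrow> (weight \<Rightarrow> 'a) \<Rightarrow> (nat \<Rightarrow> 'a \<Rightarrow> 'a)
    \<Rightarrow> (nat \<Rightarrow> 'a) \<Rightarrow> ('a \<Rightarrow> 'a) \<Rightarrow> bool" where
  "ttau_r_spec n r sc s c g E F K T B t \<longleftrightarrow>
    (let q = s^2; tr = tauI n r; C = 1 / (s * g r * g tr) in
     alg_aut_on sc (Bc n r sc E F K B) t
   \<and> (\<forall>x\<in>MXU0 n r sc E F K. t x = foldr T ([r..<n - r + 2] @ rev [r..<n - r + 1]) x)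
   \<and> t (B r) = sc (1 / q) * B r * Lw K n r * Kvp K n (r + 1)
   \<and> t (B tr) = sc (1 / q) * B tr * Lw K n tr * Kvp K n (tauI n (r + 1))
   \<and> (2 \<le> r \<longrightarrow> t (B (r - 1)) = sc C *
        (qbr sc q (B (r - 1)) (qbr sc q (B r) (qbr sc q (FXp sc q F n r) (B tr)))
         + sc (q * c tr) * B (r - 1) * Lw K n r * KXinv K n r))
   \<and> (2 \<le> r \<longrightarrow> t (B (tauI n (r - 1))) = sc C *
        (qbr sc q (B (tauI n (r - 1))) (qbr sc q (B tr) (qbr sc q (FXm sc q F n r) (B r)))
         + sc (q * c r) * B (tauI n (r - 1)) * Lw K n tr * KXinv K n r))
   \<and> (\<forall>j\<in>{1..n} - Xset n r. j \<notin> {r - 1, r, tr, tauI n (r - 1)} \<longrightarrow> t (B j) = B j))"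

end

theory Submission
  imports Defs
begin

lemma sc_basic:
  assumes "scalar_alg sc"
  shows "sc 0 = 0" "sc (- x) = - sc x" "sc (x - y) = sc x - sc y" "sc x * a = a * sc x"
    "sc (x * y) = sc x * sc y" "sc 1 = 1" "sc (x + y) = sc x + sc y"
proof -
  have add: "\<And>x y. sc (x + y) = sc x + sc y" and mul: "\<And>x y. sc (x * y) = sc x * sc y"
    and one: "sc 1 = 1" and com: "\<And>x a. sc x * a = a * sc x"
    using assms unfolding scalar_alg_def by blast+
  have z: "sc 0 = 0" using add[of 0 0] by simp
  have n: "sc (- x) = - sc x" for x
  proof -
    have "sc x + sc (- x) = 0" using add[of x "- x"] z by simp
    then show ?thesis by (simp add: add_eq_0_iff)
  qed
  show "sc 0 = 0" by fact
  show "sc (- x) = - sc x" by fact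
  show "sc (x - y) = sc x - sc y" using add[of x "- y"] n[of y] by simp
  show "sc x * a = a * sc x" by (rule com)
  show "sc (x * y) = sc x * sc y" by (rule mul)
  show "sc 1 = 1" by (rule one)
  show "sc (x + y) = sc x + sc y" by (rule add)
qed

lemma sc_left_comm:
  assumes "scalar_alg sc" shows "a * (sc k * b) = sc k * (a * b)"
  by (simp only: mult.assoc[symmetric] sc_basic(4)[OF assms, of k a])

lemma alg_gen_one: "scalar_alg sc \<Longrightarrow> 1 \<in> alg_gen sc G"
  using alg_gen.scal[of sc 1 G] sc_basic(6)[of sc] by simp

lemma alg_gen_smult: "scalar_alg sc \<Longrightarrow> x \<in> alg_gen sc G \<Longrightarrow> sc k * x \<in> alg_gen sc G"
  by (simp add: alg_gen.mult alg_gen.scal)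

lemma alg_gen_neg: "scalar_alg sc \<Longrightarrow> x \<in> alg_gen sc G \<Longrightarrow> - x \<in> alg_gen sc G"
  using alg_gen_smult[of sc x G "-1"] sc_basic(2)[of sc 1] sc_basic(6)[of sc] by simp

lemma alg_gen_diff: "scalar_alg sc \<Longrightarrow> x \<in> alg_gen sc G \<Longrightarrow> y \<in> alg_gen sc G \<Longrightarrow> x - y \<in> alg_gen sc G"
  using alg_gen.add[of x sc G "- y"] alg_gen_neg[of sc y G] by simp

lemma alg_gen_qbr: "scalar_alg sc \<Longrightarrow> x \<in> alg_gen sc G \<Longrightarrow> y \<in> alg_gen sc G \<Longrightarrow> qbr sc c x y \<in> alg_gen sc G"
  unfolding qbr_def by (intro alg_gen_diff alg_gen_smult alg_gen.mult) auto

lemma alg_gen_sub: assumes "G \<subseteq> alg_gen sc H" "x \<in> alg_gen sc G" shows "x \<in> alg_gen sc H"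
  using assms(2)
proof (induction rule: alg_gen.induct)
  case (gen x) then show ?case using assms(1) by blast
next
  case (scal k) then show ?case by (rule alg_gen.scal)
next
  case (add x y) show ?case by (rule alg_gen.add[OF add.IH])
next
  case (mult x y) show ?case by (rule alg_gen.mult[OF mult.IH])
qed

lemma alg_gen_foldr:
  assumes "scalar_alg sc" "\<forall>k\<in>set ks. F k \<in> alg_gen sc G" "b \<in> alg_gen sc G"
  shows "foldr (\<lambda>k acc. qbr sc c (F k) acc) ks b \<in> alg_gen sc G"
  using assms(2)
proof (induction ks)
  case Nil then show ?case using assms(3) by simp
next
  case (Cons k ks) then show ?case by (simp add: alg_gen_qbr[OF assms(1)])
qed

lemma hom_diff:
  assumes "scalar_alg sc" "alg_hom_on sc (alg_gen sc G) f" "x \<in> alg_gen sc G" "y \<in> alg_gen sc G"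
  shows "f (x - y) = f x - f y"
proof -
  have m1: "sc (-1) = -1" using sc_basic(2)[OF assms(1), of 1] sc_basic(6)[OF assms(1)] by simp
  have "f (sc (-1) * y) = sc (-1) * f y" using assms(2,4) unfolding alg_hom_on_def by blast
  then have fy: "f (- y) = - f y" using m1 by simp
  have ny: "- y \<in> alg_gen sc G" using alg_gen_neg assms by blast
  have "f (x + - y) = f x + f (- y)" using assms(2,3) ny unfolding alg_hom_on_def by blast
  then show ?thesis using fy by simp
qed

lemma hom_mult: "alg_hom_on sc S f \<Longrightarrow> x \<in> S \<Longrightarrow> y \<in> S \<Longrightarrow> f (x * y) = f x * f y"
  unfolding alg_hom_on_def by blast
lemma hom_smult: "alg_hom_on sc S f \<Longrightarrow> x \<in> S \<Longrightarrow> f (sc k * x) = sc k * f x"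
  unfolding alg_hom_on_def by blast
lemma hom_add: "alg_hom_on sc S f \<Longrightarrow> x \<in> S \<Longrightarrow> y \<in> S \<Longrightarrow> f (x + y) = f x + f y"
  unfolding alg_hom_on_def by blast

lemma hom_qbr:
  assumes "scalar_alg sc" "alg_hom_on sc (alg_gen sc G) f" "x \<in> alg_gen sc G" "y \<in> alg_gen sc G"
  shows "f (qbr sc c x y) = qbr sc c (f x) (f y)"
proof -
  have xy: "x * y \<in> alg_gen sc G" "y * x \<in> alg_gen sc G" "sc c * (y * x) \<in> alg_gen sc G"
    using assms by (auto intro: alg_gen.mult alg_gen_smult)
  show ?thesis unfolding qbr_def
    using hom_diff[OF assms(1,2) xy(1) xy(3)] hom_mult[OF assms(2)] hom_smult[OF assms(2)] assms xy
    by simp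
qed

lemma hom_foldr:
  assumes "scalar_alg sc" "alg_hom_on sc UNIV f" "\<forall>k\<in>set ks. f (F k) = F k" "f b = b"
  shows "f (foldr (\<lambda>k acc. qbr sc c (F k) acc) ks b) = foldr (\<lambda>k acc. qbr sc c (F k) acc) ks b"
proof -
  have U: "alg_gen sc UNIV = UNIV" by (auto intro: alg_gen.gen)
  show ?thesis using assms(3)
    by (induction ks) (auto simp: assms(4) hom_qbr[OF assms(1), of UNIV, unfolded U, OF assms(2)])
qed

lemma comm_gen:
  assumes "scalar_alg sc" "\<forall>g\<in>G. \<forall>h\<in>H. g * h = h * g"
    "x \<in> alg_gen sc G" "y \<in> alg_gen sc H"
  shows "x * y = y * x"
proof -
  have 1: "\<And>g. g \<in> G \<Longrightarrow> g * y = y * g"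
    using assms(4)
  proof (induction rule: alg_gen.induct)
    case (gen u) then show ?case using assms(2) by blast
  next
    case (scal k) show ?case by (rule sc_basic(4)[OF assms(1), symmetric])
  next
    case (add u v) then show ?case by (simp add: algebra_simps)
  next
    case (mult u v) then show ?case by (metis mult.assoc)
  qed
  show ?thesis using assms(3)
  proof (induction rule: alg_gen.induct)
    case (gen u) then show ?case using 1 by blast
  next
    case (scal k) then show ?case by (rule sc_basic(4)[OF assms(1)])
  next
    case (add u v) then show ?case by (simp add: algebra_simps)
  next
    case (mult u v) then show ?case by (metis mult.assoc)
  qed
qed

lemma sc_swap: assumes "scalar_alg sc" shows "sc x * (sc y * P) = sc y * (sc x * P)"
proof -
  have "sc x * sc y = sc y * sc x" by (rule sc_basic(4)[OF assms])
  then show ?thesis by (simp only: mult.assoc[symmetric])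
qed

lemma qbr_L4:
  assumes "scalar_alg sc" "Z * b = b * Z"
  shows "qbr sc q (qbr sc q A Z) b = qbr sc q (qbr sc q A b) Z"
proof -
  have Zb2: "Z * (b * X) = b * (Z * X)" for X by (metis assms(2) mult.assoc)
  show ?thesis unfolding qbr_def
    by (simp add: algebra_simps sc_left_comm[OF assms(1), of A] sc_left_comm[OF assms(1), of b]
          sc_left_comm[OF assms(1), of Z] assms(2) Zb2)
qed

lemma qbr_L5:
  assumes "scalar_alg sc" "W * b = b * W"
  shows "qbr sc q (A * W) b = qbr sc q A b * W"
proof -
  have Zb2: "W * (b * X) = b * (W * X)" for X by (metis assms(2) mult.assoc)
  show ?thesis unfolding qbr_def
    by (simp add: algebra_simps sc_left_comm[OF assms(1), of A] sc_left_comm[OF assms(1), of b]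
          sc_left_comm[OF assms(1), of W] assms(2) Zb2)
qed

lemma qbr_smult_left: "scalar_alg sc \<Longrightarrow> qbr sc q (sc a * X) b = sc a * qbr sc q X b"
  unfolding qbr_def by (simp add: algebra_simps sc_left_comm[of sc b] sc_swap[of sc q a])

lemma qbr_add_left: "qbr sc q (X + Y) b = qbr sc q X b + qbr sc q Y b"
  unfolding qbr_def by (simp add: algebra_simps)

lemma key_identity:
  assumes "scalar_alg sc" "Z * b = b * Z" "W * b = b * W"
  shows "sc a * qbr sc q (sc C * (qbr sc q A Z + sc d * (A * W))) b
       = sc C * (qbr sc q (sc a * qbr sc q A b) Z + sc d * ((sc a * qbr sc q A b) * W))"
proof -
  have "qbr sc q (sc C * (qbr sc q A Z + sc d * (A * W))) b
     = sc C * (qbr sc q (qbr sc q A Z) b + sc d * qbr sc q (A * W) b)"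
    unfolding qbr_smult_left[OF assms(1)] qbr_add_left by (rule refl)
  also have "\<dots> = sc C * (qbr sc q (qbr sc q A b) Z + sc d * (qbr sc q A b * W))"
    unfolding qbr_L4[OF assms(1,2)] qbr_L5[OF assms(1,3)] by (rule refl)
  finally have 1: "qbr sc q (sc C * (qbr sc q A Z + sc d * (A * W))) b = sc C * (qbr sc q (qbr sc q A b) Z + sc d * (qbr sc q A b * W))" .
  have 2: "qbr sc q (sc a * qbr sc q A b) Z = sc a * qbr sc q (qbr sc q A b) Z"
    by (rule qbr_smult_left[OF assms(1)])
  have 3: "(sc a * qbr sc q A b) * W = sc a * (qbr sc q A b * W)" by (rule mult.assoc)
  have 4: "sc a * (sc C * (P + sc d * R)) = sc C * (sc a * P + sc d * (sc a * R))" for P R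
    by (simp only: distrib_left sc_swap[OF assms(1)])
  show ?thesis unfolding 1 2 3 by (rule 4)
qed

definition ecoord :: "nat \<Rightarrow> weight \<Rightarrow> nat \<Rightarrow> int" where
  "ecoord n \<mu> m = (\<Sum>l\<in>{m..n}. \<mu> l)"

lemma ecoord_step: "m \<le> n \<Longrightarrow> ecoord n \<mu> m = \<mu> m + ecoord n \<mu> (Suc m)"
  unfolding ecoord_def by (simp add: sum.atLeast_Suc_atMost)

lemma ecoord_eq:
  assumes "\<mu> \<in> wt_lattice n" "\<nu> \<in> wt_lattice n" "\<forall>m\<in>{1..n+1}. ecoord n \<mu> m = ecoord n \<nu> m"
  shows "\<mu> = \<nu>"
proof
  fix l
  show "\<mu> l = \<nu> l"
  proof (cases "l \<in> {1..n}")
    case True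
    then have "\<mu> l = ecoord n \<mu> l - ecoord n \<mu> (Suc l)" "\<nu> l = ecoord n \<nu> l - ecoord n \<nu> (Suc l)"
      using ecoord_step by auto
    then show ?thesis using assms(3) True by auto
  next
    case False then show ?thesis using assms(1,2) unfolding wt_lattice_def by auto
  qed
qed

lemma ecoord_add: "ecoord n (wadd \<mu> \<nu>) m = ecoord n \<mu> m + ecoord n \<nu> m"
  unfolding ecoord_def wadd_def by (simp add: sum.distrib)
lemma ecoord_sub: "ecoord n (wsub \<mu> \<nu>) m = ecoord n \<mu> m - ecoord n \<nu> m"
  unfolding ecoord_def wsub_def by (simp add: sum_subtractf)
lemma ecoord_neg: "ecoord n (wneg \<mu>) m = - ecoord n \<mu> m"
  unfolding ecoord_def wneg_def by (simp add: sum_negf)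

lemma sum_delta_nat: "(\<Sum>l\<in>{m..n::nat}. if l = a then (c::int) else 0) = (if m \<le> a \<and> a \<le> n then c else 0)"
  by (simp add: sum.delta)

lemma ecoord_fund: "1 \<le> p \<Longrightarrow> p \<le> n \<Longrightarrow> ecoord n (fund_wt p) m = (if m \<le> p then 1 else 0)"
  unfolding ecoord_def fund_wt_def by (simp add: sum.delta)

lemma ecoord_sroot:
  assumes "1 \<le> k" "k \<le> n" "1 \<le> m" "m \<le> n + 1"
  shows "ecoord n (sroot n k) m = (if m = k then 1 else 0) - (if m = k + 1 then 1 else 0) + (if k = n then 1 else 0)"
proof -
  have "ecoord n (sroot n k) m = (\<Sum>l\<in>{m..n}. (if l = k then 2 else 0) - (if l = k + 1 then 1 else 0) - (if l + 1 = k then 1 else 0))"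
    unfolding ecoord_def sroot_def cartan_def using assms by (intro sum.cong) auto
  also have "\<dots> = (\<Sum>l\<in>{m..n}. (if l = k then 2 else 0)) - (\<Sum>l\<in>{m..n}. (if l = k + 1 then 1 else 0)) - (\<Sum>l\<in>{m..n}. (if l = k - 1 then 1 else 0))"
  proof -
    have "(\<Sum>l\<in>{m..n}. (if l + 1 = k then 1 else 0)) = (\<Sum>l\<in>{m..n}. (if l = k - 1 then (1::int) else 0))"
      using assms by (intro sum.cong) auto
    then show ?thesis by (simp add: sum_subtractf)
  qed
  also have "\<dots> = (if m \<le> k \<and> k \<le> n then 2 else 0) - (if m \<le> k + 1 \<and> k + 1 \<le> n then 1 else 0) - (if m \<le> k - 1 \<and> k - 1 \<le> n then 1 else 0)"
    by (simp only: sum_delta_nat)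
  also have "\<dots> = (if m = k then 1 else 0) - (if m = k + 1 then 1 else 0) + (if k = n then 1 else 0)"
    using assms by auto
  finally show ?thesis .
qed

definition swp :: "nat \<Rightarrow> nat \<Rightarrow> nat" where
  "swp k m = (if m = k then k + 1 else if m = k + 1 then k else m)"

lemma ecoord_srefl:
  assumes "1 \<le> k" "k + 1 \<le> n" "1 \<le> m" "m \<le> n + 1"
  shows "ecoord n (srefl n k \<mu>) m = ecoord n \<mu> (swp k m)"
proof -
  have "ecoord n (srefl n k \<mu>) m = ecoord n \<mu> m - \<mu> k * ecoord n (sroot n k) m"
    unfolding ecoord_def srefl_def by (simp add: sum_subtractf sum_distrib_left)
  also have "\<dots> = ecoord n \<mu> m - \<mu> k * ((if m = k then 1 else 0) - (if m = k + 1 then 1 else 0))"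
    using ecoord_sroot[of k n m] assms by simp
  also have "\<dots> = ecoord n \<mu> (swp k m)"
  proof -
    have "ecoord n \<mu> k = \<mu> k + ecoord n \<mu> (k+1)" using ecoord_step assms by simp
    then show ?thesis unfolding swp_def by auto
  qed
  finally show ?thesis .
qed

fun permw :: "nat list \<Rightarrow> nat \<Rightarrow> nat" where
  "permw [] m = m"
| "permw (k # ks) m = permw ks (swp k m)"

lemma swp_range: "1 \<le> k \<Longrightarrow> k + 1 \<le> n \<Longrightarrow> m \<in> {1..n+1} \<Longrightarrow> swp k m \<in> {1..n+1}"
  unfolding swp_def by auto

lemma ecoord_foldr:
  assumes "\<forall>k\<in>set ks. 1 \<le> k \<and> k + 1 \<le> n"
  shows "m \<in> {1..n+1} \<Longrightarrow> ecoord n (foldr (srefl n) ks \<mu>) m = ecoord n \<mu> (permw ks m)"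
  using assms
proof (induction ks arbitrary: m)
  case Nil then show ?case by simp
next
  case (Cons k ks)
  have "ecoord n (foldr (srefl n) (k # ks) \<mu>) m = ecoord n (foldr (srefl n) ks \<mu>) (swp k m)"
    using Cons.prems ecoord_srefl by auto
  also have "\<dots> = ecoord n \<mu> (permw ks (swp k m))"
    using Cons swp_range by auto
  finally show ?case by simp
qed

lemma permw_append: "permw (xs @ ys) m = permw ys (permw xs m)"
  by (induction xs arbitrary: m) auto

lemma permw_blk: "permw (rev [a..<a + t + 1]) m =
   (if a \<le> m \<and> m \<le> a + t then m + 1 else if m = a + t + 1 then a else m)"
proof (induction t arbitrary: m)
  case 0 then show ?case by (simp add: swp_def)
next
  case (Suc t)
  have "rev [a..<a + Suc t + 1] = (a + t + 1) # rev [a..<a + t + 1]" by simp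
  then have "permw (rev [a..<a + Suc t + 1]) m = permw (rev [a..<a + t + 1]) (swp (a + t + 1) m)" by simp
  also have "\<dots> = (if a \<le> m \<and> m \<le> a + Suc t then m + 1 else if m = a + Suc t + 1 then a else m)"
    unfolding Suc[of "swp (a + t + 1) m"] unfolding swp_def by auto
  finally show ?case .
qed

lemma permw_prefix: "permw (concat (map (\<lambda>t. rev [a..<a + t + 1]) [0..<t])) m =
   (if a \<le> m \<and> m \<le> a + t then 2 * a + t - m else m)"
proof (induction t arbitrary: m)
  case 0 then show ?case by (cases "m = a") auto
next
  case (Suc t)
  let ?f = "\<lambda>t. rev [a..<a + t + 1]"
  have e: "concat (map ?f [0..<Suc t]) = concat (map ?f [0..<t]) @ ?f t" by simp
  have "permw (concat (map ?f [0..<Suc t])) m = permw (?f t) (permw (concat (map ?f [0..<t])) m)"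
    unfolding e permw_append by (rule refl)
  also have "\<dots> = (if a \<le> m \<and> m \<le> a + Suc t then 2 * a + Suc t - m else m)"
    unfolding Suc.IH permw_blk by auto
  finally show ?case .
qed

lemma permw_wX: "a \<le> b + 1 \<Longrightarrow> permw (wX_word a b) m = (if a \<le> m \<and> m \<le> b + 1 then a + b + 1 - m else m)"
  unfolding wX_word_def using permw_prefix[of a "b + 1 - a" m] by auto

lemma set_wX_word: "set (wX_word a b) \<subseteq> {a..b}"
  unfolding wX_word_def by auto

lemma ecoord_tau:
  assumes "1 \<le> m" "m \<le> n + 1"
  shows "ecoord n (tau_wt n \<mu>) m = ecoord n \<mu> 1 - ecoord n \<mu> (n + 2 - m)"
proof -
  define p where "p = n + 1 - m"
  have "ecoord n (tau_wt n \<mu>) m = (\<Sum>l\<in>{m..n}. \<mu> (Suc n - l))"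
    unfolding ecoord_def tau_wt_def tauI_def using assms by (intro sum.cong) auto
  also have "\<dots> = (\<Sum>l\<in>{1..p}. \<mu> l)"
    unfolding p_def
    by (rule sum.reindex_bij_witness[where i="\<lambda>l. Suc n - l" and j="\<lambda>l. Suc n - l"]) (use assms in auto)
  also have "\<dots> = ecoord n \<mu> 1 - ecoord n \<mu> (n + 2 - m)"
  proof -
    have "ecoord n \<mu> 1 = (\<Sum>l\<in>{1..p + (n - p)}. \<mu> l)" unfolding ecoord_def p_def using assms by simp
    also have "\<dots> = (\<Sum>l\<in>{1..p}. \<mu> l) + (\<Sum>l\<in>{p + 1..p + (n - p)}. \<mu> l)"
      by (rule sum.ub_add_nat) simp
    also have "(\<Sum>l\<in>{p + 1..p + (n - p)}. \<mu> l) = ecoord n \<mu> (n + 2 - m)"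
      unfolding ecoord_def p_def using assms by (intro sum.cong) auto
    finally show ?thesis by simp
  qed
  finally show ?thesis .
qed

lemma tau_wt_lat: "tau_wt n \<mu> \<in> wt_lattice n"
  unfolding tau_wt_def wt_lattice_def by auto
lemma srefl_lat: "\<mu> \<in> wt_lattice n \<Longrightarrow> srefl n k \<mu> \<in> wt_lattice n"
  unfolding srefl_def wt_lattice_def sroot_def by auto
lemma foldr_srefl_lat: "\<mu> \<in> wt_lattice n \<Longrightarrow> foldr (srefl n) ks \<mu> \<in> wt_lattice n"
  by (induction ks) (auto intro: srefl_lat)
lemma wneg_lat: "\<mu> \<in> wt_lattice n \<Longrightarrow> wneg \<mu> \<in> wt_lattice n"
  unfolding wneg_def wt_lattice_def by auto
lemma wadd_lat: "\<mu> \<in> wt_lattice n \<Longrightarrow> \<nu> \<in> wt_lattice n \<Longrightarrow> wadd \<mu> \<nu> \<in> wt_lattice n"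
  unfolding wadd_def wt_lattice_def by auto
lemma wsub_lat: "\<mu> \<in> wt_lattice n \<Longrightarrow> \<nu> \<in> wt_lattice n \<Longrightarrow> wsub \<mu> \<nu> \<in> wt_lattice n"
  unfolding wsub_def wt_lattice_def by auto
lemma sroot_lat: "sroot n k \<in> wt_lattice n"
  unfolding sroot_def wt_lattice_def by auto
lemma fund_lat: "1 \<le> p \<Longrightarrow> p \<le> n \<Longrightarrow> fund_wt p \<in> wt_lattice n"
  unfolding fund_wt_def wt_lattice_def by auto

lemma U0_crit:
  assumes "\<mu> \<in> wt_lattice n" "1 \<le> r" "2 * r + 1 \<le> n" "ecoord n \<mu> 1 = 0"
    "\<forall>m\<in>{1..n+1}. (m \<le> r \<or> n - r + 2 \<le> m) \<longrightarrow> ecoord n \<mu> m = ecoord n \<mu> (n + 2 - m)"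
  shows "wneg (wX_act n (r + 1) (n - r) (tau_wt n \<mu>)) = \<mu>"
proof (rule ecoord_eq[OF _ assms(1)])
  show "wneg (wX_act n (r + 1) (n - r) (tau_wt n \<mu>)) \<in> wt_lattice n"
    unfolding wX_act_def by (intro wneg_lat foldr_srefl_lat tau_wt_lat)
  show "\<forall>m\<in>{1..n + 1}. ecoord n (wneg (wX_act n (r + 1) (n - r) (tau_wt n \<mu>))) m = ecoord n \<mu> m"
  proof
    fix m assume m: "m \<in> {1..n + 1}"
    define p where "p = (if r + 1 \<le> m \<and> m \<le> n - r + 1 then n + 2 - m else m)"
    have letters: "\<forall>k\<in>set (wX_word (r + 1) (n - r)). 1 \<le> k \<and> k + 1 \<le> n"
    proof
      fix k assume "k \<in> set (wX_word (r + 1) (n - r))"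
      then have "k \<in> {r+1..n-r}" using set_wX_word[of "r+1" "n-r"] by blast
      then show "1 \<le> k \<and> k + 1 \<le> n" using assms(2,3) by auto
    qed
    have pw: "permw (wX_word (r + 1) (n - r)) m = p"
      unfolding p_def using permw_wX[of "r+1" "n-r" m] assms(2,3) by auto
    have p: "1 \<le> p" "p \<le> n + 1" unfolding p_def using m assms(2,3) by auto
    have "ecoord n (wneg (wX_act n (r + 1) (n - r) (tau_wt n \<mu>))) m = - ecoord n (tau_wt n \<mu>) p"
      unfolding ecoord_neg wX_act_def ecoord_foldr[OF letters m] pw by simp
    also have "\<dots> = ecoord n \<mu> (n + 2 - p)"
      unfolding ecoord_tau[OF p] assms(4) by simp
    also have "\<dots> = ecoord n \<mu> m"
    proof (cases "r + 1 \<le> m \<and> m \<le> n - r + 1")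
      case True then show ?thesis unfolding p_def using m by auto
    next
      case False then show ?thesis unfolding p_def using m assms(5) by auto
    qed
    finally show "ecoord n (wneg (wX_act n (r + 1) (n - r) (tau_wt n \<mu>))) m = ecoord n \<mu> m" .
  qed
qed

lemma cartan0: "a + 2 \<le> b \<or> b + 2 \<le> a \<Longrightarrow> cartan a b = 0"
  unfolding cartan_def by auto

locale ctx =
  fixes s :: "'k::field_char_0" and c g :: "nat \<Rightarrow> 'k"
    and sc :: "'k \<Rightarrow> 'a::ring_1" and E F B :: "nat \<Rightarrow> 'a" and K :: "weight \<Rightarrow> 'a"
    and T tt :: "nat \<Rightarrow> 'a \<Rightarrow> 'a" and n r :: nat
  assumes r1: "1 \<le> r" and rle: "r \<le> (n + 1) div 2 - 1"
    and sa: "scalar_alg sc"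
    and uq: "uq_rels n sc (s^2) E F K"
    and lus: "\<forall>k\<in>{1..n}. lusztig n sc (s^2) E F K k (T k)"
    and Bdef: "B = Bgen n r sc (s^2) c E F K"
    and tti: "\<forall>k\<in>{1..r - 1}. ttau_i_spec n r sc s g E F K T B k (tt k)"
    and ttr: "ttau_r_spec n r sc s c g E F K T B (tt r)"
begin

lemma nr: "2 * r + 1 \<le> n"
  using rle r1 by linarith

lemma K_mul: "\<mu> \<in> wt_lattice n \<Longrightarrow> \<nu> \<in> wt_lattice n \<Longrightarrow> K \<mu> * K \<nu> = K (wadd \<mu> \<nu>)"
  using uq unfolding uq_rels_def by blast

lemma K_comm: "\<mu> \<in> wt_lattice n \<Longrightarrow> \<nu> \<in> wt_lattice n \<Longrightarrow> K \<mu> * K \<nu> = K \<nu> * K \<mu>"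
proof -
  assume a: "\<mu> \<in> wt_lattice n" "\<nu> \<in> wt_lattice n"
  have "wadd \<mu> \<nu> = wadd \<nu> \<mu>" unfolding wadd_def by (simp add: add.commute)
  then show ?thesis using K_mul[OF a] K_mul[OF a(2,1)] by simp
qed

lemma KE: assumes "\<mu> \<in> wt_lattice n" "k \<in> {1..n}" "\<mu> k = 0"
  shows "K \<mu> * E k = E k * K \<mu>"
proof -
  have "K \<mu> * E k = sc ((s^2) powi \<mu> k) * E k * K \<mu>" using uq assms(1,2) unfolding uq_rels_def by blast
  then show ?thesis using assms(3) sc_basic(6)[OF sa] by simp
qed

lemma KF: assumes "\<mu> \<in> wt_lattice n" "k \<in> {1..n}" "\<mu> k = 0"
  shows "K \<mu> * F k = F k * K \<mu>"
proof -
  have "K \<mu> * F k = sc ((s^2) powi (- \<mu> k)) * F k * K \<mu>" using uq assms(1,2) unfolding uq_rels_def by blast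
  then show ?thesis using assms(3) sc_basic(6)[OF sa] by simp
qed

lemma EF: assumes "k \<in> {1..n}" "l \<in> {1..n}" "k \<noteq> l" shows "E k * F l = F l * E k"
proof -
  have "E k * F l - F l * E k = (if k = l then sc (1 / (s^2 - 1 / s^2)) * (K (sroot n k) - K (wneg (sroot n k))) else 0)"
    using uq assms(1,2) unfolding uq_rels_def by blast
  then show ?thesis using assms(3) by simp
qed

lemma EE: assumes "k \<in> {1..n}" "l \<in> {1..n}" "k \<noteq> l" "cartan k l = 0" shows "E k * E l = E l * E k"
  using uq assms unfolding uq_rels_def by blast

lemma FF: assumes "k \<in> {1..n}" "l \<in> {1..n}" "k \<noteq> l" "cartan k l = 0" shows "F k * F l = F l * F k"
  using uq assms unfolding uq_rels_def by blast

lemma T_hom: "k \<in> {1..n} \<Longrightarrow> alg_hom_on sc UNIV (T k)"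
  using lus unfolding lusztig_def alg_aut_on_def by blast

lemma T_F: "k \<in> {1..n} \<Longrightarrow> m \<in> {1..n} \<Longrightarrow> m \<noteq> k \<Longrightarrow> cartan k m = 0 \<Longrightarrow> T k (F m) = F m"
  using lus unfolding lusztig_def by blast

lemma T_K: assumes "k \<in> {1..n}" "\<mu> \<in> wt_lattice n" "\<mu> k = 0" shows "T k (K \<mu>) = K \<mu>"
proof -
  have "T k (K \<mu>) = K (srefl n k \<mu>)" using lus assms(1,2) unfolding lusztig_def by blast
  moreover have "srefl n k \<mu> = \<mu>" unfolding srefl_def using assms(3) by simp
  ultimately show ?thesis by simp
qed

lemma T_foldr_K: "\<forall>k\<in>set ks. k \<in> {1..n} \<and> \<mu> k = 0 \<Longrightarrow> \<mu> \<in> wt_lattice n \<Longrightarrow> foldr T ks (K \<mu>) = K \<mu>"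
  by (induction ks) (auto simp: T_K)

abbreviation "BC \<equiv> Bc n r sc E F K B"
abbreviation "MXs \<equiv> MX n r sc E F K"
abbreviation "U0s \<equiv> U0Theta n r sc K"
abbreviation "MU \<equiv> MXU0 n r sc E F K"

lemma MX_Bc: "x \<in> MXs \<Longrightarrow> x \<in> BC"
  unfolding Bc_def by (rule alg_gen.gen) simp
lemma U0_Bc: "x \<in> U0s \<Longrightarrow> x \<in> BC"
  unfolding Bc_def by (rule alg_gen.gen) simp
lemma B_Bc: "j \<in> {1..n} - Xset n r \<Longrightarrow> B j \<in> BC"
  unfolding Bc_def by (rule alg_gen.gen) blast

lemma F_MX: "k \<in> Xset n r \<Longrightarrow> F k \<in> MXs"
  unfolding MX_def by (rule alg_gen.gen) blast

lemma FXp_MX: "FXp sc q F n r \<in> MXs"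
proof -
  have "\<forall>k\<in>set [r + 1..<n - r]. F k \<in> MXs" using F_MX by (auto simp: Xset_def)
  moreover have "F (n - r) \<in> MXs" using F_MX nr by (auto simp: Xset_def)
  ultimately show ?thesis unfolding FXp_def MX_def by (rule alg_gen_foldr[OF sa])
qed

lemma FXm_MX: "FXm sc q F n r \<in> MXs"
proof -
  have "\<forall>k\<in>set (rev [r + 2..<n - r + 1]). F k \<in> MXs" using F_MX by (auto simp: Xset_def)
  moreover have "F (r + 1) \<in> MXs" using F_MX nr by (auto simp: Xset_def)
  ultimately show ?thesis unfolding FXm_def MX_def by (rule alg_gen_foldr[OF sa])
qed

lemma MU_MX: assumes "x \<in> MXs" shows "x \<in> MU"
proof -
  have "x = x * 1" by simp
  moreover have "(1::'a) \<in> U0s" unfolding U0Theta_def by (rule alg_gen_one[OF sa])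
  ultimately show ?thesis unfolding MXU0_def using assms by blast
qed

lemma MU_U0: assumes "x \<in> U0s" shows "x \<in> MU"
proof -
  have "x = 1 * x" by simp
  moreover have "(1::'a) \<in> MXs" unfolding MX_def by (rule alg_gen_one[OF sa])
  ultimately show ?thesis unfolding MXU0_def using assms by blast
qed

lemma K_U0:
  assumes "\<mu> \<in> wt_lattice n" "ecoord n \<mu> 1 = 0"
    "\<forall>m\<in>{1..n+1}. (m \<le> r \<or> n - r + 2 \<le> m) \<longrightarrow> ecoord n \<mu> m = ecoord n \<mu> (n + 2 - m)"
  shows "K \<mu> \<in> U0s"
proof -
  have "wneg (wX_act n (r + 1) (n - r) (tau_wt n \<mu>)) = \<mu>"
    by (rule U0_crit[OF assms(1) r1 nr assms(2,3)])
  then show ?thesis unfolding U0Theta_def using assms(1) by (intro alg_gen.gen) blast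
qed

end

context ctx begin

lemma e_wL:
  assumes "p \<in> {1..n}" "m \<in> {1..n+1}"
  shows "ecoord n (wsub (sroot n p) (sroot n (tauI n p))) m =
    (if m = p then 1 else 0) - (if m = p + 1 then 1 else 0) + (if p = n then 1 else 0)
    - ((if m = Suc n - p then 1 else 0) - (if m = Suc n - p + 1 then 1 else 0) + (if Suc n - p = n then 1 else 0))"
proof -
  have a: "ecoord n (sroot n p) m = (if m = p then 1 else 0) - (if m = p + 1 then 1 else 0) + (if p = n then 1 else 0)"
    by (rule ecoord_sroot) (use assms in auto)
  have b: "ecoord n (sroot n (Suc n - p)) m = (if m = Suc n - p then 1 else 0) - (if m = Suc n - p + 1 then 1 else 0) + (if Suc n - p = n then 1 else 0)"
    by (rule ecoord_sroot) (use assms in auto)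
  show ?thesis unfolding ecoord_sub tauI_def a b by (rule refl)
qed

lemma Lw_U0: assumes "p \<in> {1..n}" shows "Lw K n p \<in> U0s"
  unfolding Lw_def
proof (rule K_U0)
  show "wsub (sroot n p) (sroot n (tauI n p)) \<in> wt_lattice n" by (intro wsub_lat sroot_lat)
  show "ecoord n (wsub (sroot n p) (sroot n (tauI n p))) 1 = 0"
    using e_wL[OF assms, of 1] assms by auto
  show "\<forall>m\<in>{1..n + 1}. m \<le> r \<or> n - r + 2 \<le> m \<longrightarrow>
      ecoord n (wsub (sroot n p) (sroot n (tauI n p))) m = ecoord n (wsub (sroot n p) (sroot n (tauI n p))) (n + 2 - m)"
  proof (intro ballI impI)
    fix m assume m: "m \<in> {1..n+1}"
    then have m2: "n + 2 - m \<in> {1..n+1}" by auto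
    show "ecoord n (wsub (sroot n p) (sroot n (tauI n p))) m = ecoord n (wsub (sroot n p) (sroot n (tauI n p))) (n + 2 - m)"
    proof -
      have 1: "(n + 2 - m = p) = (m = Suc n - p + 1)" "(n + 2 - m = p + 1) = (m = Suc n - p)"
        "(n + 2 - m = Suc n - p) = (m = p + 1)" "(n + 2 - m = Suc n - p + 1) = (m = p)"
        using assms m by auto
      show ?thesis unfolding e_wL[OF assms m] e_wL[OF assms m2] 1 by (simp add: algebra_simps)
    qed
  qed
qed

lemma e_wKv:
  assumes "p \<in> {1..n}"
  shows "ecoord n (wsub (fund_wt p) (fund_wt (tauI n p))) m = (if m \<le> p then 1 else 0) - (if m \<le> Suc n - p then 1 else 0)"
proof -
  have a: "ecoord n (fund_wt p) m = (if m \<le> p then 1 else 0)" by (rule ecoord_fund) (use assms in auto)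
  have b: "ecoord n (fund_wt (Suc n - p)) m = (if m \<le> Suc n - p then 1 else 0)" by (rule ecoord_fund) (use assms in auto)
  show ?thesis unfolding ecoord_sub tauI_def a b by (rule refl)
qed

lemma Kvp_U0: assumes "p \<in> {1..n}" shows "Kvp K n p \<in> U0s"
  unfolding Kvp_def
proof (rule K_U0)
  show "wsub (fund_wt p) (fund_wt (tauI n p)) \<in> wt_lattice n"
    using assms by (intro wsub_lat fund_lat) (auto simp: tauI_def)
  show "ecoord n (wsub (fund_wt p) (fund_wt (tauI n p))) 1 = 0"
    using e_wKv[OF assms, of 1] assms by auto
  show "\<forall>m\<in>{1..n + 1}. m \<le> r \<or> n - r + 2 \<le> m \<longrightarrow>
      ecoord n (wsub (fund_wt p) (fund_wt (tauI n p))) m = ecoord n (wsub (fund_wt p) (fund_wt (tauI n p))) (n + 2 - m)"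
    unfolding e_wKv[OF assms] using assms by auto
qed

definition wXw :: "nat \<Rightarrow> nat \<Rightarrow> weight" where
  "wXw n' r' = (\<lambda>k. - (\<Sum>j\<in>Xset n' r'. sroot n' j k))"

lemma KXinv_eq: "KXinv K n r = K (wXw n r)"
  unfolding KXinv_def wXw_def by simp

lemma wXw_lat: "wXw n r \<in> wt_lattice n"
  unfolding wXw_def wt_lattice_def sroot_def by auto

lemma e_wX:
  assumes m: "m \<in> {1..n+1}"
  shows "ecoord n (wXw n r) m = (if r + 2 \<le> m \<and> m \<le> n - r + 1 then 1 else 0) - (if r + 1 \<le> m \<and> m \<le> n - r then 1 else 0)"
proof -
  have "ecoord n (wXw n r) m = (\<Sum>l\<in>{m..n}. - (\<Sum>j\<in>Xset n r. sroot n j l))"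
    unfolding ecoord_def wXw_def by simp
  also have "\<dots> = - (\<Sum>l\<in>{m..n}. \<Sum>j\<in>Xset n r. sroot n j l)" by (simp add: sum_negf)
  also have "(\<Sum>l\<in>{m..n}. \<Sum>j\<in>Xset n r. sroot n j l) = (\<Sum>j\<in>Xset n r. \<Sum>l\<in>{m..n}. sroot n j l)"
    by (rule sum.swap)
  also have "\<dots> = (\<Sum>j\<in>Xset n r. ecoord n (sroot n j) m)" unfolding ecoord_def by simp
  also have "\<dots> = (\<Sum>j\<in>Xset n r. (if m = j then 1 else 0) - (if m = j + 1 then 1 else 0))"
    using m nr r1 by (intro sum.cong) (auto simp: ecoord_sroot Xset_def)
  also have "\<dots> = (\<Sum>j\<in>Xset n r. (if m = j then 1 else 0)) - (\<Sum>j\<in>Xset n r. (if m - 1 = j then 1 else 0))"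
  proof -
    have "(\<Sum>j\<in>Xset n r. (if m = j + 1 then 1 else 0)) = (\<Sum>j\<in>Xset n r. (if m - 1 = j then (1::int) else 0))"
      using m by (intro sum.cong) auto
    then show ?thesis by (simp add: sum_subtractf)
  qed
  also have "\<dots> = (if m \<in> Xset n r then 1 else 0) - (if m - 1 \<in> Xset n r then 1 else 0)"
    by (simp add: Xset_def)
  finally show ?thesis using m unfolding Xset_def by auto
qed

lemma KX_U0: "KXinv K n r \<in> U0s"
  unfolding KXinv_eq
proof (rule K_U0[OF wXw_lat])
  show "ecoord n (wXw n r) 1 = 0" using e_wX[of 1] r1 by auto
  show "\<forall>m\<in>{1..n + 1}. m \<le> r \<or> n - r + 2 \<le> m \<longrightarrow> ecoord n (wXw n r) m = ecoord n (wXw n r) (n + 2 - m)"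
  proof (intro ballI impI)
    fix m assume m: "m \<in> {1..n+1}" and c: "m \<le> r \<or> n - r + 2 \<le> m"
    then have m2: "n + 2 - m \<in> {1..n+1}" by auto
    show "ecoord n (wXw n r) m = ecoord n (wXw n r) (n + 2 - m)"
      unfolding e_wX[OF m] e_wX[OF m2] using m c nr by auto
  qed
qed

end

context ctx begin

lemma tti_spec: "p \<in> {1..r-1} \<Longrightarrow> ttau_i_spec n r sc s g E F K T B p (tt p)"
  using tti by blast

lemma tti_hom: "p \<in> {1..r-1} \<Longrightarrow> alg_hom_on sc BC (tt p)"
  using tti_spec unfolding ttau_i_spec_def alg_aut_on_def by blast

lemma tti_MU: "p \<in> {1..r-1} \<Longrightarrow> x \<in> MU \<Longrightarrow> tt p x = T p (T (tauI n p) x)"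
  using tti_spec unfolding ttau_i_spec_def by blast

lemma tti_B1: "p \<in> {1..r-1} \<Longrightarrow> j \<in> {1..n} - Xset n r \<Longrightarrow> j \<in> {p, tauI n p} \<Longrightarrow>
   tt p (B j) = sc (1 / s^2) * B (tauI n j) * Lw K n (tauI n j)"
  using tti_spec unfolding ttau_i_spec_def by blast

lemma tti_B2: "p \<in> {1..r-1} \<Longrightarrow> j \<in> {1..n} - Xset n r \<Longrightarrow> cartan p j = -1 \<Longrightarrow>
   tt p (B j) = sc (1 / (s * g p)) * qbr sc (s^2) (B j) (B p)"
  using tti_spec unfolding ttau_i_spec_def by blast

lemma tti_B3: "p \<in> {1..r-1} \<Longrightarrow> j \<in> {1..n} - Xset n r \<Longrightarrow> cartan (tauI n p) j = -1 \<Longrightarrow>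
   tt p (B j) = sc (1 / (s * g (tauI n p))) * qbr sc (s^2) (B j) (B (tauI n p))"
  using tti_spec unfolding ttau_i_spec_def by blast

lemma tti_B4: "p \<in> {1..r-1} \<Longrightarrow> j \<in> {1..n} - Xset n r \<Longrightarrow> cartan p j = 0 \<Longrightarrow> cartan (tauI n p) j = 0 \<Longrightarrow>
   tt p (B j) = B j"
  using tti_spec unfolding ttau_i_spec_def by blast

lemma ttr_all: "alg_aut_on sc BC (tt r)
   \<and> (\<forall>x\<in>MU. tt r x = foldr T ([r..<n - r + 2] @ rev [r..<n - r + 1]) x)
   \<and> tt r (B r) = sc (1 / s^2) * B r * Lw K n r * Kvp K n (r + 1)
   \<and> tt r (B (tauI n r)) = sc (1 / s^2) * B (tauI n r) * Lw K n (tauI n r) * Kvp K n (tauI n (r + 1))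
   \<and> (2 \<le> r \<longrightarrow> tt r (B (r - 1)) = sc (1 / (s * g r * g (tauI n r))) *
        (qbr sc (s^2) (B (r - 1)) (qbr sc (s^2) (B r) (qbr sc (s^2) (FXp sc (s^2) F n r) (B (tauI n r))))
         + sc (s^2 * c (tauI n r)) * B (r - 1) * Lw K n r * KXinv K n r))
   \<and> (2 \<le> r \<longrightarrow> tt r (B (tauI n (r - 1))) = sc (1 / (s * g r * g (tauI n r))) *
        (qbr sc (s^2) (B (tauI n (r - 1))) (qbr sc (s^2) (B (tauI n r)) (qbr sc (s^2) (FXm sc (s^2) F n r) (B r)))
         + sc (s^2 * c r) * B (tauI n (r - 1)) * Lw K n (tauI n r) * KXinv K n r))
   \<and> (\<forall>j\<in>{1..n} - Xset n r. j \<notin> {r - 1, r, tauI n r, tauI n (r - 1)} \<longrightarrow> tt r (B j) = B j)"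
  using ttr unfolding ttau_r_spec_def Let_def by blast

lemma ttr_hom: "alg_hom_on sc BC (tt r)" using ttr_all unfolding alg_aut_on_def by blast
lemma ttr_MU: "x \<in> MU \<Longrightarrow> tt r x = foldr T ([r..<n - r + 2] @ rev [r..<n - r + 1]) x" using ttr_all by blast
lemma ttr_Br: "tt r (B r) = sc (1 / s^2) * B r * Lw K n r * Kvp K n (r + 1)" using ttr_all by blast
lemma ttr_Btr: "tt r (B (tauI n r)) = sc (1 / s^2) * B (tauI n r) * Lw K n (tauI n r) * Kvp K n (tauI n (r + 1))"
  using ttr_all by blast
lemma ttr_Brm1: "2 \<le> r \<Longrightarrow> tt r (B (r - 1)) = sc (1 / (s * g r * g (tauI n r))) *
        (qbr sc (s^2) (B (r - 1)) (qbr sc (s^2) (B r) (qbr sc (s^2) (FXp sc (s^2) F n r) (B (tauI n r))))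
         + sc (s^2 * c (tauI n r)) * B (r - 1) * Lw K n r * KXinv K n r)"
  using ttr_all by blast
lemma ttr_Btrm1: "2 \<le> r \<Longrightarrow> tt r (B (tauI n (r - 1))) = sc (1 / (s * g r * g (tauI n r))) *
        (qbr sc (s^2) (B (tauI n (r - 1))) (qbr sc (s^2) (B (tauI n r)) (qbr sc (s^2) (FXm sc (s^2) F n r) (B r)))
         + sc (s^2 * c r) * B (tauI n (r - 1)) * Lw K n (tauI n r) * KXinv K n r)"
  using ttr_all by blast
lemma ttr_Bj: "j \<in> {1..n} - Xset n r \<Longrightarrow> j \<notin> {r - 1, r, tauI n r, tauI n (r - 1)} \<Longrightarrow> tt r (B j) = B j"
  using ttr_all by blast

lemma ttr_fixK:
  assumes "\<mu> \<in> wt_lattice n" "K \<mu> \<in> U0s" "\<forall>k\<in>{r..n-r+1}. \<mu> k = 0"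
  shows "tt r (K \<mu>) = K \<mu>"
proof -
  have "tt r (K \<mu>) = foldr T ([r..<n - r + 2] @ rev [r..<n - r + 1]) (K \<mu>)"
    using ttr_MU MU_U0 assms(2) by blast
  also have "\<dots> = K \<mu>"
    using assms(1,3) r1 nr by (intro T_foldr_K) auto
  finally show ?thesis .
qed

lemma tti_fixK:
  assumes "p \<in> {1..r-1}" "\<mu> \<in> wt_lattice n" "K \<mu> \<in> U0s" "\<mu> p = 0" "\<mu> (tauI n p) = 0"
  shows "tt p (K \<mu>) = K \<mu>"
proof -
  have p: "p \<in> {1..n}" "tauI n p \<in> {1..n}" using assms(1) nr by (auto simp: tauI_def)
  have "tt p (K \<mu>) = T p (T (tauI n p) (K \<mu>))" using tti_MU[OF assms(1)] MU_U0 assms(3) by blast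
  then show ?thesis using T_K[OF p(2) assms(2,5)] T_K[OF p(1) assms(2,4)] by simp
qed

lemma T_fix_FXp:
  assumes "k \<in> {1..n}" "\<forall>m\<in>Xset n r. m \<noteq> k \<and> cartan k m = 0"
  shows "T k (FXp sc q F n r) = FXp sc q F n r"
  unfolding FXp_def
proof (rule hom_foldr[OF sa T_hom[OF assms(1)]])
  show "\<forall>m\<in>set [r + 1..<n - r]. T k (F m) = F m"
    using assms nr by (auto simp: Xset_def intro!: T_F)
  show "T k (F (n - r)) = F (n - r)"
    using assms nr by (auto simp: Xset_def intro!: T_F)
qed

lemma T_fix_FXm:
  assumes "k \<in> {1..n}" "\<forall>m\<in>Xset n r. m \<noteq> k \<and> cartan k m = 0"
  shows "T k (FXm sc q F n r) = FXm sc q F n r"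
  unfolding FXm_def
proof (rule hom_foldr[OF sa T_hom[OF assms(1)]])
  show "\<forall>m\<in>set (rev [r + 2..<n - r + 1]). T k (F m) = F m"
    using assms nr by (auto simp: Xset_def intro!: T_F)
  show "T k (F (r + 1)) = F (r + 1)"
    using assms nr by (auto simp: Xset_def intro!: T_F)
qed

lemma X_far:
  assumes "p \<in> {1..r-1}"
  shows "\<forall>m\<in>Xset n r. m \<noteq> p \<and> cartan p m = 0" "\<forall>m\<in>Xset n r. m \<noteq> tauI n p \<and> cartan (tauI n p) m = 0"
  using assms nr by (auto simp: Xset_def tauI_def intro!: cartan0)

lemma tti_fixFXp: assumes "p \<in> {1..r-1}" shows "tt p (FXp sc q F n r) = FXp sc q F n r"
proof -
  have p: "p \<in> {1..n}" "tauI n p \<in> {1..n}" using assms(1) nr by (auto simp: tauI_def)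
  have "tt p (FXp sc q F n r) = T p (T (tauI n p) (FXp sc q F n r))"
    using tti_MU[OF assms(1)] MU_MX FXp_MX by blast
  then show ?thesis using T_fix_FXp[OF p(2) X_far(2)[OF assms]] T_fix_FXp[OF p(1) X_far(1)[OF assms]] by simp
qed

lemma tti_fixFXm: assumes "p \<in> {1..r-1}" shows "tt p (FXm sc q F n r) = FXm sc q F n r"
proof -
  have p: "p \<in> {1..n}" "tauI n p \<in> {1..n}" using assms(1) nr by (auto simp: tauI_def)
  have "tt p (FXm sc q F n r) = T p (T (tauI n p) (FXm sc q F n r))"
    using tti_MU[OF assms(1)] MU_MX FXm_MX by blast
  then show ?thesis using T_fix_FXm[OF p(2) X_far(2)[OF assms]] T_fix_FXm[OF p(1) X_far(1)[OF assms]] by simp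
qed

end

context ctx begin

lemma sroot0: "a + 2 \<le> b \<or> b + 2 \<le> a \<Longrightarrow> sroot n a b = 0"
  unfolding sroot_def using cartan0 by auto

lemma inIX: "k \<in> {1..n} \<Longrightarrow> k \<le> r \<or> n - r + 1 \<le> k \<Longrightarrow> k \<in> {1..n} - Xset n r"
  unfolding Xset_def by auto

lemma BC_mult: "x \<in> BC \<Longrightarrow> y \<in> BC \<Longrightarrow> x * y \<in> BC"
  unfolding Bc_def by (rule alg_gen.mult)
lemma BC_add: "x \<in> BC \<Longrightarrow> y \<in> BC \<Longrightarrow> x + y \<in> BC"
  unfolding Bc_def by (rule alg_gen.add)
lemma BC_smult: "x \<in> BC \<Longrightarrow> sc k * x \<in> BC"
  unfolding Bc_def by (rule alg_gen_smult[OF sa])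
lemma BC_qbr: "x \<in> BC \<Longrightarrow> y \<in> BC \<Longrightarrow> qbr sc q x y \<in> BC"
  unfolding Bc_def by (rule alg_gen_qbr[OF sa])

lemma hBC_qbr: "alg_hom_on sc BC f \<Longrightarrow> x \<in> BC \<Longrightarrow> y \<in> BC \<Longrightarrow> f (qbr sc q x y) = qbr sc q (f x) (f y)"
  unfolding Bc_def by (rule hom_qbr[OF sa])

definition Gp :: "nat \<Rightarrow> 'a set" where
  "Gp p = F ` {r..tauI n r} \<union> E ` {r..tauI n r} \<union> K ` {\<mu> \<in> wt_lattice n. \<mu> p = 0 \<and> \<mu> (tauI n p) = 0}"
definition Hp :: "nat \<Rightarrow> 'a set" where
  "Hp p = {F p, E (tauI n p), K (wneg (sroot n p))}"

definition far :: "nat \<Rightarrow> bool" where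
  "far p \<longleftrightarrow> p \<in> {1..n} \<and> (p + 2 \<le> r \<or> n + 3 \<le> p + r)"

lemma far_tau: "far p \<Longrightarrow> far (tauI n p)"
  unfolding far_def tauI_def by auto

lemma far_dist: "far p \<Longrightarrow> k \<in> {r..tauI n r} \<Longrightarrow> p + 2 \<le> k \<or> k + 2 \<le> p"
  unfolding far_def tauI_def by auto

lemma comm_GH:
  assumes fp: "far p" and g: "u \<in> Gp p" and h: "v \<in> Hp p"
  shows "u * v = v * u"
proof -
  have fp': "far (tauI n p)" by (rule far_tau[OF fp])
  have p: "p \<in> {1..n}" "tauI n p \<in> {1..n}" using fp fp' unfolding far_def by auto
  have kr: "k \<in> {1..n}" if "k \<in> {r..tauI n r}" for k using that r1 nr unfolding tauI_def by auto
  have ne: "k \<noteq> p" "k \<noteq> tauI n p" if "k \<in> {r..tauI n r}" for k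
    using far_dist[OF fp that] far_dist[OF fp' that] by auto
  have c0: "cartan k p = 0" "cartan p k = 0" "cartan k (tauI n p) = 0" "cartan (tauI n p) k = 0"
    if "k \<in> {r..tauI n r}" for k
    using far_dist[OF fp that] far_dist[OF fp' that] by (auto intro!: cartan0)
  define \<nu> where "\<nu> = wneg (sroot n p)"
  have \<nu>lat: "\<nu> \<in> wt_lattice n" unfolding \<nu>_def by (intro wneg_lat sroot_lat)
  have \<nu>0: "\<nu> k = 0" if "k \<in> {r..tauI n r}" for k
    using c0[OF that] kr[OF that] unfolding \<nu>_def wneg_def sroot_def by auto
  show ?thesis
  proof -
    from g consider (f) k where "k \<in> {r..tauI n r}" "u = F k" | (e) k where "k \<in> {r..tauI n r}" "u = E k"
      | (kk) \<mu> where "\<mu> \<in> wt_lattice n" "\<mu> p = 0" "\<mu> (tauI n p) = 0" "u = K \<mu>"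
      unfolding Gp_def by blast
    then show ?thesis
    proof cases
      case f
      from h consider "v = F p" | "v = E (tauI n p)" | "v = K \<nu>" unfolding Hp_def \<nu>_def by blast
      then show ?thesis
      proof cases
        case 1 then show ?thesis using f FF[OF kr[OF f(1)] p(1) ne(1)[OF f(1)] c0(1)[OF f(1)]] by simp
      next
        case 2 then show ?thesis using f EF[OF p(2) kr[OF f(1)] not_sym[OF ne(2)[OF f(1)]]] by simp
      next
        case 3 then show ?thesis using f KF[OF \<nu>lat kr[OF f(1)] \<nu>0[OF f(1)]] by simp
      qed
    next
      case e
      from h consider "v = F p" | "v = E (tauI n p)" | "v = K \<nu>" unfolding Hp_def \<nu>_def by blast
      then show ?thesis
      proof cases
        case 1 then show ?thesis using e EF[OF kr[OF e(1)] p(1) ne(1)[OF e(1)]] by simp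
      next
        case 2 then show ?thesis using e EE[OF kr[OF e(1)] p(2) ne(2)[OF e(1)] c0(3)[OF e(1)]] by simp
      next
        case 3 then show ?thesis using e KE[OF \<nu>lat kr[OF e(1)] \<nu>0[OF e(1)]] by simp
      qed
    next
      case kk
      from h consider "v = F p" | "v = E (tauI n p)" | "v = K \<nu>" unfolding Hp_def \<nu>_def by blast
      then show ?thesis
      proof cases
        case 1 then show ?thesis using kk KF[OF kk(1) p(1) kk(2)] by simp
      next
        case 2 then show ?thesis using kk KE[OF kk(1) p(2) kk(3)] by simp
      next
        case 3 then show ?thesis using kk K_comm[OF kk(1) \<nu>lat] by simp
      qed
    qed
  qed
qed

lemma B_Hp: assumes "far p" shows "B p \<in> alg_gen sc (Hp p)"
proof -
  have "p \<noteq> r" "p \<noteq> tauI n r" using assms nr unfolding far_def tauI_def by auto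
  then have "B p = F p - sc (c p) * E (tauI n p) * K (wneg (sroot n p))"
    unfolding Bdef Bgen_def by simp
  moreover have "F p - sc (c p) * E (tauI n p) * K (wneg (sroot n p)) \<in> alg_gen sc (Hp p)"
    unfolding Hp_def
    by (intro alg_gen_diff[OF sa] alg_gen.mult alg_gen.scal alg_gen.gen) auto
  ultimately show ?thesis by simp
qed

lemma K_Gp: "\<mu> \<in> wt_lattice n \<Longrightarrow> \<mu> p = 0 \<Longrightarrow> \<mu> (tauI n p) = 0 \<Longrightarrow> K \<mu> \<in> alg_gen sc (Gp p)"
  unfolding Gp_def by (intro alg_gen.gen) blast

lemma F_Gp: "k \<in> {r..tauI n r} \<Longrightarrow> F k \<in> alg_gen sc (Gp p)"
  unfolding Gp_def by (intro alg_gen.gen) blast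
lemma E_Gp: "k \<in> {r..tauI n r} \<Longrightarrow> E k \<in> alg_gen sc (Gp p)"
  unfolding Gp_def by (intro alg_gen.gen) blast

lemma Kneg_Gp: assumes "far p" "k \<in> {r..tauI n r}" shows "K (wneg (sroot n k)) \<in> alg_gen sc (Gp p)"
proof (rule K_Gp)
  show "wneg (sroot n k) \<in> wt_lattice n" by (intro wneg_lat sroot_lat)
  show "wneg (sroot n k) p = 0" using far_dist[OF assms] sroot0 unfolding wneg_def by auto
  show "wneg (sroot n k) (tauI n p) = 0" using far_dist[OF far_tau[OF assms(1)] assms(2)] sroot0 unfolding wneg_def by auto
qed

lemma Br_Gp: assumes "far p" shows "B r \<in> alg_gen sc (Gp p)" "B (tauI n r) \<in> alg_gen sc (Gp p)"
proof -
  have rr: "r \<in> {r..tauI n r}" "tauI n r \<in> {r..tauI n r}" using nr unfolding tauI_def by auto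
  have EXp: "EXp sc (s^2) E n r \<in> alg_gen sc (Gp p)"
    unfolding EXp_def by (rule alg_gen_foldr[OF sa]) (use nr in \<open>auto simp: tauI_def intro!: E_Gp\<close>)
  have EXm: "EXm sc (s^2) E n r \<in> alg_gen sc (Gp p)"
    unfolding EXm_def by (rule alg_gen_foldr[OF sa]) (use nr in \<open>auto simp: tauI_def intro!: E_Gp\<close>)
  have "B r = F r - sc (c r) * qbr sc (1 / s^2) (EXp sc (s^2) E n r) (E (tauI n r)) * K (wneg (sroot n r))"
    unfolding Bdef Bgen_def by simp
  moreover have "\<dots> \<in> alg_gen sc (Gp p)"
    by (intro alg_gen_diff[OF sa] alg_gen.mult alg_gen.scal alg_gen_qbr[OF sa] F_Gp E_Gp Kneg_Gp[OF assms] EXp rr)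
  ultimately show "B r \<in> alg_gen sc (Gp p)" by simp
  have ne: "tauI n r \<noteq> r" using nr unfolding tauI_def by auto
  have "B (tauI n r) = F (tauI n r) - sc (c (tauI n r)) * qbr sc (1 / s^2) (EXm sc (s^2) E n r) (E r) * K (wneg (sroot n (tauI n r)))"
    unfolding Bdef Bgen_def using ne by simp
  moreover have "\<dots> \<in> alg_gen sc (Gp p)"
    by (intro alg_gen_diff[OF sa] alg_gen.mult alg_gen.scal alg_gen_qbr[OF sa] F_Gp E_Gp Kneg_Gp[OF assms] EXm rr)
  ultimately show "B (tauI n r) \<in> alg_gen sc (Gp p)" by simp
qed

lemma FX_Gp: "FXp sc q F n r \<in> alg_gen sc (Gp p)" "FXm sc q F n r \<in> alg_gen sc (Gp p)"
  unfolding FXp_def FXm_def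
  by (rule alg_gen_foldr[OF sa]; use nr in \<open>auto simp: tauI_def intro!: F_Gp\<close>)+

end

context ctx begin

lemma rr_in: "r \<in> {r..tauI n r}" "tauI n r \<in> {r..tauI n r}" "r + 1 \<in> {r..tauI n r}" "tauI n (r + 1) \<in> {r..tauI n r}"
  using nr unfolding tauI_def by auto

lemma far_sroot: "far p \<Longrightarrow> k \<in> {r..tauI n r} \<Longrightarrow> sroot n k p = 0"
  using far_dist sroot0 by blast
lemma far_sroot': "far p \<Longrightarrow> k \<in> {r..tauI n r} \<Longrightarrow> sroot n p k = 0"
  using far_dist sroot0 by blast
lemma far_fund: "far p \<Longrightarrow> k \<in> {r..tauI n r} \<Longrightarrow> fund_wt k p = 0"
  using far_dist unfolding fund_wt_def by fastforce
lemma far_wX: assumes "far p" shows "wXw n r p = 0"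
proof -
  have "\<forall>j\<in>Xset n r. sroot n j p = 0"
  proof
    fix j assume "j \<in> Xset n r"
    then have "j \<in> {r..tauI n r}" unfolding Xset_def tauI_def by auto
    then show "sroot n j p = 0" by (rule far_sroot[OF assms])
  qed
  then show ?thesis unfolding wXw_def by simp
qed

lemma small_far: "p \<in> {1..r-2} \<Longrightarrow> far p" "p \<in> {1..r-2} \<Longrightarrow> far (tauI n p)"
  using nr unfolding far_def tauI_def by auto

lemma small_ri: "p \<in> {1..r-2} \<Longrightarrow> p \<in> {1..r-1}" by auto

lemma ttp_fixB:
  assumes p: "p \<in> {1..r-2}"
  shows "tt p (B r) = B r" "tt p (B (tauI n r)) = B (tauI n r)"
proof -
  have f: "far p" "far (tauI n p)" using small_far[OF p] by auto
  have c: "cartan p k = 0" "cartan (tauI n p) k = 0" if "k \<in> {r..tauI n r}" for k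
    using far_dist[OF f(1) that] far_dist[OF f(2) that] by (auto intro!: cartan0)
  have j: "r \<in> {1..n} - Xset n r" "tauI n r \<in> {1..n} - Xset n r"
    using r1 nr unfolding Xset_def tauI_def by auto
  show "tt p (B r) = B r" using tti_B4[OF small_ri[OF p] j(1) c[OF rr_in(1)]] .
  show "tt p (B (tauI n r)) = B (tauI n r)" using tti_B4[OF small_ri[OF p] j(2) c[OF rr_in(2)]] .
qed

lemma ttp_fixK:
  assumes p: "p \<in> {1..r-2}"
  shows "tt p (Lw K n r) = Lw K n r" "tt p (Lw K n (tauI n r)) = Lw K n (tauI n r)"
    "tt p (KXinv K n r) = KXinv K n r"
    "tt p (Kvp K n (r + 1)) = Kvp K n (r + 1)" "tt p (Kvp K n (tauI n (r + 1))) = Kvp K n (tauI n (r + 1))"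
proof -
  have f: "far p" "far (tauI n p)" using small_far[OF p] by auto
  have pp: "p \<in> {1..r-1}" using p by auto
  have ttr: "tauI n (tauI n r) = r" "tauI n (tauI n (r + 1)) = r + 1" "tauI n (tauI n (Suc r)) = Suc r" using nr unfolding tauI_def by auto
  have rn: "r \<in> {1..n}" "tauI n r \<in> {1..n}" "r + 1 \<in> {1..n}" "tauI n (r + 1) \<in> {1..n}"
    using r1 nr unfolding tauI_def by auto
  have m: "wsub (sroot n r) (sroot n (tauI n r)) \<in> wt_lattice n" by (intro wsub_lat sroot_lat)
  show "tt p (Lw K n r) = Lw K n r"
    unfolding Lw_def
    by (rule tti_fixK[OF pp m]) (use Lw_U0[OF rn(1)] f rr_in in \<open>auto simp: Lw_def wsub_def far_sroot intro: wsub_lat sroot_lat\<close>)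
  have m2: "wsub (sroot n (tauI n r)) (sroot n (tauI n (tauI n r))) \<in> wt_lattice n" by (intro wsub_lat sroot_lat)
  show "tt p (Lw K n (tauI n r)) = Lw K n (tauI n r)"
    unfolding Lw_def
    by (rule tti_fixK[OF pp m2]) (use Lw_U0[OF rn(2)] f rr_in in \<open>auto simp: Lw_def wsub_def far_sroot ttr intro: wsub_lat sroot_lat\<close>)
  show "tt p (KXinv K n r) = KXinv K n r"
    unfolding KXinv_eq
    by (rule tti_fixK[OF pp wXw_lat]) (use KX_U0 far_wX f in \<open>auto simp: KXinv_eq\<close>)
  have m3: "wsub (fund_wt (r + 1)) (fund_wt (tauI n (r + 1))) \<in> wt_lattice n"
    using rn by (intro wsub_lat fund_lat) auto
  show "tt p (Kvp K n (r + 1)) = Kvp K n (r + 1)"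
    unfolding Kvp_def
    by (rule tti_fixK[OF pp m3]) (use Kvp_U0[OF rn(3)] f rr_in rn in \<open>auto simp: Kvp_def wsub_def far_fund intro: wsub_lat fund_lat\<close>)
  have m4: "wsub (fund_wt (tauI n (r + 1))) (fund_wt (tauI n (tauI n (r + 1)))) \<in> wt_lattice n"
    using rn unfolding ttr by (intro wsub_lat fund_lat) auto
  show "tt p (Kvp K n (tauI n (r + 1))) = Kvp K n (tauI n (r + 1))"
    unfolding Kvp_def
    by (rule tti_fixK[OF pp m4]) (use Kvp_U0[OF rn(4)] f rr_in rn in \<open>auto simp: Kvp_def wsub_def far_fund ttr intro: wsub_lat fund_lat\<close>)
qed

lemma ttr_fixLp:
  assumes "far p"
  shows "tt r (Lw K n p) = Lw K n p"
  unfolding Lw_def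
proof (rule ttr_fixK)
  have p: "p \<in> {1..n}" using assms unfolding far_def by auto
  show "wsub (sroot n p) (sroot n (tauI n p)) \<in> wt_lattice n" by (intro wsub_lat sroot_lat)
  show "K (wsub (sroot n p) (sroot n (tauI n p))) \<in> U0s" using Lw_U0[OF p] unfolding Lw_def .
  show "\<forall>k\<in>{r..n - r + 1}. wsub (sroot n p) (sroot n (tauI n p)) k = 0"
  proof
    fix k assume "k \<in> {r..n - r + 1}"
    then have k: "k \<in> {r..tauI n r}" using nr unfolding tauI_def by auto
    show "wsub (sroot n p) (sroot n (tauI n p)) k = 0"
      unfolding wsub_def using far_sroot'[OF assms k] far_sroot'[OF far_tau[OF assms] k] by simp
  qed
qed

end

context ctx begin

lemma far_BC: "far p \<Longrightarrow> B p \<in> BC"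
  by (rule B_Bc) (use nr in \<open>auto simp: far_def Xset_def\<close>)

lemma far_ttr: "far p \<Longrightarrow> tt r (B p) = B p"
  by (rule ttr_Bj) (use nr in \<open>auto simp: far_def Xset_def tauI_def\<close>)

lemma W_Gp: assumes "far p"
  shows "Lw K n r * KXinv K n r \<in> alg_gen sc (Gp p)" "Lw K n (tauI n r) * KXinv K n r \<in> alg_gen sc (Gp p)"
proof -
  have f: "far p" "far (tauI n p)" using assms far_tau by auto
  have ttr: "tauI n (tauI n r) = r" using nr unfolding tauI_def by auto
  have X: "KXinv K n r \<in> alg_gen sc (Gp p)"
    unfolding KXinv_eq by (rule K_Gp[OF wXw_lat far_wX[OF f(1)] far_wX[OF f(2)]])
  have l1: "wsub (sroot n r) (sroot n (tauI n r)) \<in> wt_lattice n" by (intro wsub_lat sroot_lat)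
  have l2: "wsub (sroot n (tauI n r)) (sroot n r) \<in> wt_lattice n" by (intro wsub_lat sroot_lat)
  have L1: "Lw K n r \<in> alg_gen sc (Gp p)"
    unfolding Lw_def
    by (rule K_Gp[OF l1]) (use f rr_in in \<open>auto simp: wsub_def far_sroot intro: wsub_lat sroot_lat\<close>)
  have L2: "Lw K n (tauI n r) \<in> alg_gen sc (Gp p)"
    unfolding Lw_def ttr
    by (rule K_Gp[OF l2]) (use f rr_in in \<open>auto simp: wsub_def far_sroot intro: wsub_lat sroot_lat\<close>)
  show "Lw K n r * KXinv K n r \<in> alg_gen sc (Gp p)" by (rule alg_gen.mult[OF L1 X])
  show "Lw K n (tauI n r) * KXinv K n r \<in> alg_gen sc (Gp p)" by (rule alg_gen.mult[OF L2 X])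
qed

lemma Z_Gp: assumes "far p"
  shows "qbr sc (s^2) (B r) (qbr sc (s^2) (FXp sc (s^2) F n r) (B (tauI n r))) \<in> alg_gen sc (Gp p)"
    "qbr sc (s^2) (B (tauI n r)) (qbr sc (s^2) (FXm sc (s^2) F n r) (B r)) \<in> alg_gen sc (Gp p)"
  by (intro alg_gen_qbr[OF sa] Br_Gp[OF assms] FX_Gp)+

lemma comm_far:
  assumes "far p" "x \<in> alg_gen sc (Gp p)"
  shows "x * B p = B p * x"
  by (rule comm_gen[OF sa _ assms(2) B_Hp[OF assms(1)]]) (use comm_GH[OF assms(1)] in blast)

lemma GenRm1:
  assumes p: "p \<in> {1..r-2}"
  shows "tt p (tt r (B (r - 1))) = sc (1 / (s * g r * g (tauI n r))) *
     (qbr sc (s^2) (tt p (B (r - 1))) (qbr sc (s^2) (B r) (qbr sc (s^2) (FXp sc (s^2) F n r) (B (tauI n r))))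
      + sc (s^2 * c (tauI n r)) * tt p (B (r - 1)) * Lw K n r * KXinv K n r)"
proof -
  have pp: "p \<in> {1..r-1}" using p by auto
  have r2: "2 \<le> r" using p by auto
  have h: "alg_hom_on sc BC (tt p)" by (rule tti_hom[OF pp])
  let ?A = "B (r-1)" let ?FX = "FXp sc (s^2) F n r"
  let ?Z = "qbr sc (s^2) (B r) (qbr sc (s^2) ?FX (B (tauI n r)))"
  let ?L = "Lw K n r" let ?X = "KXinv K n r"
  have mA: "?A \<in> BC" by (rule B_Bc) (use r2 nr in \<open>auto simp: Xset_def\<close>)
  have mBr: "B r \<in> BC" "B (tauI n r) \<in> BC" by (rule B_Bc, use r1 nr in \<open>auto simp: Xset_def tauI_def\<close>)+
  have mFX: "?FX \<in> BC" by (rule MX_Bc[OF FXp_MX])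
  have mZ2: "qbr sc (s^2) ?FX (B (tauI n r)) \<in> BC" by (rule BC_qbr[OF mFX mBr(2)])
  have mZ: "?Z \<in> BC" by (rule BC_qbr[OF mBr(1) mZ2])
  have mL: "?L \<in> BC" using U0_Bc[OF Lw_U0] r1 nr by auto
  have mX: "?X \<in> BC" using U0_Bc[OF KX_U0] .
  have m1: "qbr sc (s^2) ?A ?Z \<in> BC" by (rule BC_qbr[OF mA mZ])
  have m2: "sc (s^2 * c (tauI n r)) * ?A \<in> BC" by (rule BC_smult[OF mA])
  have m3: "sc (s^2 * c (tauI n r)) * ?A * ?L \<in> BC" by (rule BC_mult[OF m2 mL])
  have m4: "sc (s^2 * c (tauI n r)) * ?A * ?L * ?X \<in> BC" by (rule BC_mult[OF m3 mX])
  have m5: "qbr sc (s^2) ?A ?Z + sc (s^2 * c (tauI n r)) * ?A * ?L * ?X \<in> BC" by (rule BC_add[OF m1 m4])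
  have tZ: "tt p ?Z = ?Z"
    unfolding hBC_qbr[OF h mBr(1) mZ2] hBC_qbr[OF h mFX mBr(2)] ttp_fixB[OF p] tti_fixFXp[OF pp] by (rule refl)
  show ?thesis
    unfolding ttr_Brm1[OF r2] hom_smult[OF h m5] hom_add[OF h m1 m4] hBC_qbr[OF h mA mZ] tZ
      hom_mult[OF h m3 mX] hom_mult[OF h m2 mL] hom_smult[OF h mA] ttp_fixK[OF p] by (rule refl)
qed

lemma GenTrm1:
  assumes p: "p \<in> {1..r-2}"
  shows "tt p (tt r (B (tauI n (r - 1)))) = sc (1 / (s * g r * g (tauI n r))) *
     (qbr sc (s^2) (tt p (B (tauI n (r - 1)))) (qbr sc (s^2) (B (tauI n r)) (qbr sc (s^2) (FXm sc (s^2) F n r) (B r)))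
      + sc (s^2 * c r) * tt p (B (tauI n (r - 1))) * Lw K n (tauI n r) * KXinv K n r)"
proof -
  have pp: "p \<in> {1..r-1}" using p by auto
  have r2: "2 \<le> r" using p by auto
  have h: "alg_hom_on sc BC (tt p)" by (rule tti_hom[OF pp])
  let ?A = "B (tauI n (r-1))" let ?FX = "FXm sc (s^2) F n r"
  let ?Z = "qbr sc (s^2) (B (tauI n r)) (qbr sc (s^2) ?FX (B r))"
  let ?L = "Lw K n (tauI n r)" let ?X = "KXinv K n r"
  have mA: "?A \<in> BC" by (rule B_Bc) (use r2 nr in \<open>auto simp: Xset_def tauI_def\<close>)
  have mBr: "B r \<in> BC" "B (tauI n r) \<in> BC" by (rule B_Bc, use r1 nr in \<open>auto simp: Xset_def tauI_def\<close>)+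
  have mFX: "?FX \<in> BC" by (rule MX_Bc[OF FXm_MX])
  have mZ2: "qbr sc (s^2) ?FX (B r) \<in> BC" by (rule BC_qbr[OF mFX mBr(1)])
  have mZ: "?Z \<in> BC" by (rule BC_qbr[OF mBr(2) mZ2])
  have "tauI n r \<in> {1..n}" using r1 nr by (auto simp: tauI_def)
  then have mL: "?L \<in> BC" using U0_Bc[OF Lw_U0] by blast
  have mX: "?X \<in> BC" using U0_Bc[OF KX_U0] .
  have m1: "qbr sc (s^2) ?A ?Z \<in> BC" by (rule BC_qbr[OF mA mZ])
  have m2: "sc (s^2 * c r) * ?A \<in> BC" by (rule BC_smult[OF mA])
  have m3: "sc (s^2 * c r) * ?A * ?L \<in> BC" by (rule BC_mult[OF m2 mL])
  have m4: "sc (s^2 * c r) * ?A * ?L * ?X \<in> BC" by (rule BC_mult[OF m3 mX])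
  have m5: "qbr sc (s^2) ?A ?Z + sc (s^2 * c r) * ?A * ?L * ?X \<in> BC" by (rule BC_add[OF m1 m4])
  have tZ: "tt p ?Z = ?Z"
    unfolding hBC_qbr[OF h mBr(2) mZ2] hBC_qbr[OF h mFX mBr(1)] ttp_fixB[OF p] tti_fixFXm[OF pp] by (rule refl)
  show ?thesis
    unfolding ttr_Btrm1[OF r2] hom_smult[OF h m5] hom_add[OF h m1 m4] hBC_qbr[OF h mA mZ] tZ
      hom_mult[OF h m3 mX] hom_mult[OF h m2 mL] hom_smult[OF h mA] ttp_fixK[OF p] by (rule refl)
qed

end

context ctx begin

lemma main:
  assumes i: "i \<in> {1..r-2}" and j: "j \<in> {1..n} - Xset n r"
  shows "tt r (tt i (B j)) = tt i (tt r (B j))"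
proof -
  have ii: "i \<in> {1..r-1}" using i by auto
  have fi: "far i" "far (tauI n i)" using small_far[OF i] by auto
  have r3: "3 \<le> r" using i by auto
  have r2: "2 \<le> r" using i by auto
  have hr: "alg_hom_on sc BC (tt r)" by (rule ttr_hom)
  have hi: "alg_hom_on sc BC (tt i)" by (rule tti_hom[OF ii])
  have jn: "j \<in> {1..n}" using j by auto
  have c2: "cartan a b = -1 \<or> cartan a b = 0" if "a \<noteq> b" for a b
    using that unfolding cartan_def by auto
  have cD: "i = r - 2" if "cartan i j = -1" "j = r - 1" using that i unfolding cartan_def by (auto split: if_splits)
  have cD': "i = r - 2" if "cartan (tauI n i) j = -1" "j = tauI n (r - 1)"
    using that i nr unfolding cartan_def tauI_def by (auto split: if_splits)
  consider (A) "j = i \<or> j = tauI n i"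
    | (D) "j = r - 1" "i = r - 2"
    | (D') "j = tauI n (r - 1)" "i = r - 2"
    | (B1) "j \<noteq> i" "j \<noteq> tauI n i" "cartan i j = -1" "j \<noteq> r - 1"
    | (B2) "j \<noteq> i" "j \<noteq> tauI n i" "cartan (tauI n i) j = -1" "j \<noteq> tauI n (r - 1)"
    | (C) "j \<noteq> i" "j \<noteq> tauI n i" "cartan i j = 0" "cartan (tauI n i) j = 0"
    using c2[of i j] c2[of "tauI n i" j] cD cD' by metis
  then show ?thesis
  proof cases
    case A
    define jj where "jj = tauI n j"
    have fj: "far j" "far jj" using A fi far_tau unfolding jj_def
      by (metis far_def far_tau tauI_def diff_diff_cancel le_SucI atLeastAtMost_iff)+
    have tij: "tt i (B j) = sc (1 / s^2) * B jj * Lw K n jj"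
      unfolding jj_def by (rule tti_B1[OF ii j]) (use A in auto)
    have mB: "B jj \<in> BC" by (rule far_BC[OF fj(2)])
    have mL: "Lw K n jj \<in> BC" using U0_Bc[OF Lw_U0] fj(2) unfolding far_def by blast
    have mS: "sc (1 / s^2) * B jj \<in> BC" by (rule BC_smult[OF mB])
    show ?thesis
      unfolding tij hom_mult[OF hr mS mL] hom_smult[OF hr mB] far_ttr[OF fj(2)] ttr_fixLp[OF fj(2)]
        far_ttr[OF fj(1)] ..
  next
    case B1
    have fj: "far j" using B1 i jn unfolding far_def cartan_def by (auto split: if_splits)
    have tij: "tt i (B j) = sc (1 / (s * g i)) * qbr sc (s^2) (B j) (B i)" by (rule tti_B2[OF ii j B1(3)])
    show ?thesis
      unfolding tij hom_smult[OF hr BC_qbr[OF far_BC[OF fj] far_BC[OF fi(1)]]]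
        hBC_qbr[OF hr far_BC[OF fj] far_BC[OF fi(1)]] far_ttr[OF fj] far_ttr[OF fi(1)] ..
  next
    case B2
    have fj: "far j" using B2 i jn nr unfolding far_def cartan_def tauI_def by (auto split: if_splits)
    have tij: "tt i (B j) = sc (1 / (s * g (tauI n i))) * qbr sc (s^2) (B j) (B (tauI n i))" by (rule tti_B3[OF ii j B2(3)])
    show ?thesis
      unfolding tij hom_smult[OF hr BC_qbr[OF far_BC[OF fj] far_BC[OF fi(2)]]]
        hBC_qbr[OF hr far_BC[OF fj] far_BC[OF fi(2)]] far_ttr[OF fj] far_ttr[OF fi(2)] ..
  next
    case C
    have tij: "tt i (B j) = B j" by (rule tti_B4[OF ii j C(3,4)])
    have "tt r (B j) = tt i (tt r (B j))"
    proof -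
      consider "j = r" | "j = tauI n r" | "j = r - 1" | "j = tauI n (r - 1)"
        | "j \<notin> {r - 1, r, tauI n r, tauI n (r - 1)}" by blast
      then show ?thesis
      proof cases
        case 1
        have mB: "B r \<in> BC" using far_BC j 1 B_Bc by blast
        have mL: "Lw K n r \<in> BC" using U0_Bc[OF Lw_U0] r1 nr by auto
        have mV: "Kvp K n (r + 1) \<in> BC" using U0_Bc[OF Kvp_U0] r1 nr by auto
        have m2: "sc (1 / s^2) * B r \<in> BC" by (rule BC_smult[OF mB])
        have m3: "sc (1 / s^2) * B r * Lw K n r \<in> BC" by (rule BC_mult[OF m2 mL])
        show ?thesis unfolding 1 ttr_Br hom_mult[OF hi m3 mV] hom_mult[OF hi m2 mL] hom_smult[OF hi mB]
          ttp_fixB[OF i] ttp_fixK[OF i] ..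
      next
        case 2
        have mB: "B (tauI n r) \<in> BC" using j 2 B_Bc by blast
        have "tauI n r \<in> {1..n}" "tauI n (r + 1) \<in> {1..n}" using r1 nr by (auto simp: tauI_def)
        then have mL: "Lw K n (tauI n r) \<in> BC" and mV: "Kvp K n (tauI n (r + 1)) \<in> BC"
          using U0_Bc[OF Lw_U0] U0_Bc[OF Kvp_U0] by blast+
        have m2: "sc (1 / s^2) * B (tauI n r) \<in> BC" by (rule BC_smult[OF mB])
        have m3: "sc (1 / s^2) * B (tauI n r) * Lw K n (tauI n r) \<in> BC" by (rule BC_mult[OF m2 mL])
        show ?thesis unfolding 2 ttr_Btr hom_mult[OF hi m3 mV] hom_mult[OF hi m2 mL] hom_smult[OF hi mB]
          ttp_fixB[OF i] ttp_fixK[OF i] ..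
      next
        case 3
        have tA: "tt i (B (r - 1)) = B (r - 1)" using tij unfolding 3 .
        show ?thesis unfolding 3 GenRm1[OF i, unfolded tA] by (rule ttr_Brm1[OF r2])
      next
        case 4
        have tA: "tt i (B (tauI n (r - 1))) = B (tauI n (r - 1))" using tij unfolding 4 .
        show ?thesis unfolding 4 GenTrm1[OF i, unfolded tA] by (rule ttr_Btrm1[OF r2])
      next
        case 5
        then show ?thesis using ttr_Bj[OF j] tij by simp
      qed
    qed
    then show ?thesis unfolding tij .
  next
    case D
    have cij: "cartan i j = -1" using D r3 unfolding cartan_def by auto
    have tij: "tt i (B j) = sc (1 / (s * g i)) * qbr sc (s^2) (B j) (B i)" by (rule tti_B2[OF ii j cij])
    have mA: "B (r - 1) \<in> BC" using j D(1) B_Bc by blast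
    have Zb: "qbr sc (s^2) (B r) (qbr sc (s^2) (FXp sc (s^2) F n r) (B (tauI n r))) * B i
        = B i * qbr sc (s^2) (B r) (qbr sc (s^2) (FXp sc (s^2) F n r) (B (tauI n r)))"
      by (rule comm_far[OF fi(1) Z_Gp(1)[OF fi(1)]])
    have Wb: "(Lw K n r * KXinv K n r) * B i = B i * (Lw K n r * KXinv K n r)"
      by (rule comm_far[OF fi(1) W_Gp(1)[OF fi(1)]])
    have mj: "B j \<in> BC" by (rule B_Bc[OF j])
    have L: "tt r (tt i (B j)) = sc (1 / (s * g i)) * qbr sc (s^2) (tt r (B j)) (B i)"
      unfolding tij hom_smult[OF hr BC_qbr[OF mj far_BC[OF fi(1)]]] hBC_qbr[OF hr mj far_BC[OF fi(1)]]
        far_ttr[OF fi(1)] ..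
    show ?thesis
      unfolding D(1) L[unfolded D(1) ttr_Brm1[OF r2]] GenRm1[OF i, unfolded tij[unfolded D(1)]]
      using key_identity[OF sa Zb Wb, of "1 / (s * g i)" "s^2" "1 / (s * g r * g (tauI n r))" "B (r - 1)"
          "s^2 * c (tauI n r)"]
      by (simp only: mult.assoc)
  next
    case D'
    have cij: "cartan (tauI n i) j = -1" using D' r3 nr unfolding cartan_def tauI_def by auto
    have tij: "tt i (B j) = sc (1 / (s * g (tauI n i))) * qbr sc (s^2) (B j) (B (tauI n i))"
      by (rule tti_B3[OF ii j cij])
    have mA: "B (tauI n (r - 1)) \<in> BC" using j D'(1) B_Bc by blast
    have Zb: "qbr sc (s^2) (B (tauI n r)) (qbr sc (s^2) (FXm sc (s^2) F n r) (B r)) * B (tauI n i)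
        = B (tauI n i) * qbr sc (s^2) (B (tauI n r)) (qbr sc (s^2) (FXm sc (s^2) F n r) (B r))"
      by (rule comm_far[OF fi(2) Z_Gp(2)[OF fi(2)]])
    have Wb: "(Lw K n (tauI n r) * KXinv K n r) * B (tauI n i) = B (tauI n i) * (Lw K n (tauI n r) * KXinv K n r)"
      by (rule comm_far[OF fi(2) W_Gp(2)[OF fi(2)]])
    have mj: "B j \<in> BC" by (rule B_Bc[OF j])
    have L: "tt r (tt i (B j)) = sc (1 / (s * g (tauI n i))) * qbr sc (s^2) (tt r (B j)) (B (tauI n i))"
      unfolding tij hom_smult[OF hr BC_qbr[OF mj far_BC[OF fi(2)]]] hBC_qbr[OF hr mj far_BC[OF fi(2)]]
        far_ttr[OF fi(2)] ..
    show ?thesis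
      unfolding D'(1) L[unfolded D'(1) ttr_Btrm1[OF r2]] GenTrm1[OF i, unfolded tij[unfolded D'(1)]]
      using key_identity[OF sa Zb Wb, of "1 / (s * g (tauI n i))" "s^2" "1 / (s * g r * g (tauI n r))"
          "B (tauI n (r - 1))" "s^2 * c r"]
      by (simp only: mult.assoc)
  qed
qed

end

theorem proposition5p1:
  fixes Kf :: "'k::field_char_0 set" and s :: 'k and c g :: "nat \<Rightarrow> 'k"
    and sc :: "'k \<Rightarrow> 'a::ring_1" and E F B :: "nat \<Rightarrow> 'a" and K :: "weight \<Rightarrow> 'a"
    and T tt :: "nat \<Rightarrow> 'a \<Rightarrow> 'a" and n r i j :: nat
  assumes "1 \<le> n" and "1 \<le> r" and "r \<le> (n + 1) div 2 - 1"
    and "subfield Kf" and "transcendental_over Kf s"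
    and "\<forall>k\<in>{1..n} - Xset n r. c k \<in> adjoin Kf s \<and> c k \<noteq> 0"
    and "\<forall>k\<in>{1..n} - (Xset n r \<union> {r, tauI n r}). c k = c (tauI n k)"
    and "\<forall>k\<in>{1..n} - Xset n r. g k ^ 2 = c k"
    and "scalar_alg sc"
    and "uq_rels n sc (s^2) E F K"
    and "\<forall>k\<in>{1..n}. lusztig n sc (s^2) E F K k (T k)"
    and "B = Bgen n r sc (s^2) c E F K"
    and "\<forall>k\<in>{1..r - 1}. ttau_i_spec n r sc s g E F K T B k (tt k)"
    and "ttau_r_spec n r sc s c g E F K T B (tt r)"
    and "i \<in> {1..r - 2}" and "j \<in> {1..n} - Xset n r"
  shows "tt r (tt i (B j)) = tt i (tt r (B j))"
proof -
  have "ctx s c g sc E F B K T tt n r"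
    unfolding ctx_def using assms by blast
  then show ?thesis using ctx.main assms(15,16) by blast
qed

end
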